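(* For every integer $n\ge5$, if $T$ is a uniformly random standard Young tableau of shape $(n,n,n)$, then $$\Pr(T_{3,3}=13)=\frac{110\,n^2(n-1)(n+1)^2(n+2)(233n^2-1933n+3984)}{81(3n-1)(3n-2)(3n-4)(3n-5)(3n-7)(3n-8)(3n-10)(3n-11)}.$$
   Context: A standard Young tableau of shape $(n,n,n)$ is a bijective filling $T$ of the cells $[a,b]$ ($1\le a\le 3$, $1\le b\le n$; row $a$, column $b$) by $\{1,\dots,3n\}$ that increases along each row and down each column. $T_{a,b}$ denotes the entry in cell $[a,b]$. *)

theory Defs
  imports Complex_Main
begin

definition cells3 :: "nat \<Rightarrow> (nat \<times> nat) set" where
  "cells3 n = {1..3} \<times> {1..n}"

text \<open>Standard Young tableaux of shape (n,n,n), as fillings T of the cells,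
  with T extended by 0 outside the shape (so that the set of tableaux is finite).\<close>
definition SYT3 :: "nat \<Rightarrow> (nat \<times> nat \<Rightarrow> nat) set" where
  "SYT3 n = {T. bij_betw T (cells3 n) {1..3*n}
     \<and> (\<forall>c. c \<notin> cells3 n \<longrightarrow> T c = 0)
     \<and> (\<forall>a b. (a, b) \<in> cells3 n \<longrightarrow> (a, Suc b) \<in> cells3 n \<longrightarrow> T (a, b) < T (a, Suc b))
     \<and> (\<forall>a b. (a, b) \<in> cells3 n \<longrightarrow> (Suc a, b) \<in> cells3 n \<longrightarrow> T (a, b) < T (Suc a, b))}"

definition syt_prob :: "nat \<Rightarrow> ((nat \<times> nat \<Rightarrow> nat) \<Rightarrow> bool) \<Rightarrow> real" where
  "syt_prob n P = real (card {T \<in> SYT3 n. P T}) / real (card (SYT3 n))"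

end

theory Submission
  imports Defs
begin


definition cnt :: "nat \<Rightarrow> nat \<Rightarrow> nat list \<Rightarrow> nat" where
  "cnt i k w = length (filter (\<lambda>x. x = i) (take k w))"

definition Good :: "nat \<Rightarrow> nat \<Rightarrow> nat \<Rightarrow> nat \<Rightarrow> nat \<Rightarrow> nat \<Rightarrow> nat list \<Rightarrow> bool" where
  "Good a b c x y z v \<longleftrightarrow> set v \<subseteq> {1,2,3} \<and>
    (\<forall>k. b + cnt 2 k v \<le> a + cnt 1 k v \<and> c + cnt 3 k v \<le> b + cnt 2 k v) \<and>
    a + cnt 1 (length v) v = x \<and> b + cnt 2 (length v) v = y \<and> c + cnt 3 (length v) v = z"

definition GS where "GS a b c x y z = {v. Good a b c x y z v}"

lemma cnt_0[simp]: "cnt i 0 w = 0" by (simp add: cnt_def)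
lemma cnt_Nil[simp]: "cnt i k [] = 0" by (simp add: cnt_def)
lemma cnt_Cons_Suc[simp]: "cnt i (Suc k) (u # v) = (if u = i then 1 else 0) + cnt i k v"
  by (simp add: cnt_def)

lemma Good_Nil: "Good a b c x y z [] \<longleftrightarrow> b \<le> a \<and> c \<le> b \<and> a = x \<and> b = y \<and> c = z"
  by (auto simp: Good_def)

lemma Good_Cons: "Good a b c x y z (u # v) \<longleftrightarrow> u \<in> {1,2,3} \<and> b \<le> a \<and> c \<le> b \<and>
   Good (a + (if u = 1 then 1 else 0)) (b + (if u = 2 then 1 else 0)) (c + (if u = 3 then 1 else 0)) x y z v"
proof -
  have A: "(\<forall>k. P k) \<longleftrightarrow> P 0 \<and> (\<forall>k. P (Suc k))" for P :: "nat \<Rightarrow> bool"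
    by (metis not0_implies_Suc)
  show ?thesis
    unfolding Good_def
    apply (subst A)
    apply (auto simp: add_ac)
    done
qed


lemma Good_len: "Good a b c x y z v \<Longrightarrow> a + b + c + length v = x + y + z"
proof (induction v arbitrary: a b c)
  case Nil thus ?case by (simp add: Good_Nil)
next
  case (Cons u v)
  then show ?case by (auto simp: Good_Cons split: if_splits dest!: Cons.IH)
qed

lemma Good_bounds: "Good a b c x y z v \<Longrightarrow> a \<le> x \<and> b \<le> y \<and> c \<le> z \<and> y \<le> x \<and> z \<le> y \<and> b \<le> a \<and> c \<le> b"
  unfolding Good_def by (metis add_0_right cnt_0 le_add1)

lemma GS_finite: "finite (GS a b c x y z)"
proof -
  have "GS a b c x y z \<subseteq> {v. set v \<subseteq> {1,2,3} \<and> length v \<le> x + y + z}"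
    using Good_len by (fastforce simp: GS_def Good_def)
  moreover have "finite {v. set v \<subseteq> {1::nat,2,3} \<and> length v \<le> x + y + z}"
    by (rule finite_lists_length_le) simp
  ultimately show ?thesis by (rule finite_subset)
qed

lemma GS_rec: "GS a b c x y z = (if b\<le>a \<and> c\<le>b \<and> a=x \<and> b=y \<and> c=z then {[]} else {}) \<union>
  (if b \<le> a \<and> c \<le> b then Cons 1 ` GS (a+1) b c x y z \<union> Cons 2 ` GS a (b+1) c x y z \<union> Cons 3 ` GS a b (c+1) x y z else {})"
  (is "?L = ?R")
proof (rule set_eqI)
  fix v show "v \<in> ?L \<longleftrightarrow> v \<in> ?R"
  proof (cases v)
    case Nil then show ?thesis by (auto simp: GS_def Good_Nil)
  next
    case (Cons u w)
    show ?thesis unfolding Cons by (auto simp: GS_def Good_Cons)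
  qed
qed

lemma card_GS: "card (GS a b c x y z) = (if b \<le> a \<and> c \<le> b \<and> a \<le> x \<and> b \<le> y \<and> c \<le> z \<and> y \<le> x \<and> z \<le> y
   then (if a=x\<and>b=y\<and>c=z then 1 else 0) + card (GS (a+1) b c x y z) + card (GS a (b+1) c x y z) + card (GS a b (c+1) x y z) else 0)"
proof (cases "b \<le> a \<and> c \<le> b \<and> a \<le> x \<and> b \<le> y \<and> c \<le> z \<and> y \<le> x \<and> z \<le> y")
  case False
  then have "GS a b c x y z = {}" using Good_bounds by (auto simp: GS_def)
  then show ?thesis by (subst if_not_P[OF False]) simp
next
  case True
  let ?E = "(if b\<le>a \<and> c\<le>b \<and> a=x \<and> b=y \<and> c=z then {[]} else {}) :: nat list set"
  have fE: "finite ?E" by simp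
  have cE: "card ?E = (if a=x\<and>b=y\<and>c=z then 1 else 0)" using True by simp
  have d: "?E \<inter> (Cons 1 ` GS (a+1) b c x y z \<union> Cons 2 ` GS a (b+1) c x y z \<union> Cons 3 ` GS a b (c+1) x y z) = {}"
    by auto
  have c1: "card (Cons 1 ` GS (a+1) b c x y z \<union> Cons 2 ` GS a (b+1) c x y z \<union> Cons 3 ` GS a b (c+1) x y z)
     = card (GS (a+1) b c x y z) + card (GS a (b+1) c x y z) + card (GS a b (c+1) x y z)"
    by (subst card_Un_disjoint, (auto simp: GS_finite card_image)[3])+ (auto simp: GS_finite card_image)
  show ?thesis
    apply (subst GS_rec)
    using True fE d c1 cE GS_finite by (simp add: card_Un_disjoint)
qed




definition fr :: "nat \<Rightarrow> nat \<Rightarrow> nat \<Rightarrow> real" where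
  "fr p q r = fact (p+q+r) * ((real p - real q + 1) * (real p - real r + 2) * (real q - real r + 1))
      / (fact (p+2) * fact (q+1) * fact r)"

lemma sf0: "(s::real) \<noteq> 0 \<Longrightarrow> F \<noteq> 0 \<Longrightarrow> f \<noteq> 0 \<Longrightarrow> G*X/(F*f) = G/(F*(s*f))*s*X"
  by (simp add: field_simps)

lemma sf: "(0::real) < F \<Longrightarrow> G * X / (F * fact k) = G / (F * fact (Suc k)) * real (Suc k) * X"
  unfolding fact_Suc by (rule sf0) auto

lemma fr_rec:
  assumes "p + q + r = Suc M" and rq: "r \<le> q" and qp: "q \<le> p"
  shows "fr p q r = (if r>0 then fr p q (r-1) else 0) + (if q>r then fr p (q-1) r else 0) + (if p>q then fr (p-1) q r else 0)"
proof -
  define A where "A = fact M / (fact (p+2) * fact (q+1) * fact r :: real)"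
  have L0: "fr p q r = A * (real p + real q + real r) * ((real p - real q + 1) * (real p - real r + 2) * (real q - real r + 1))"
  proof -
    have "(fact (p+q+r) :: real) = (real p + real q + real r) * fact M"
      unfolding assms(1) fact_Suc by (simp add: assms(1)[symmetric])
    then show ?thesis unfolding fr_def A_def by simp
  qed
  have L3: "(if r>0 then fr p q (r-1) else 0) = A * real r * ((real p - real q + 1) * (real p - real r + 3) * (real q - real r + 2))"
  proof (cases r)
    case 0 then show ?thesis by simp
  next
    case (Suc r')
    have M: "p + q + r' = M" using assms Suc by simp
    have "fr p q (r-1) = fact M * ((real p - real q + 1) * (real p - real r' + 2) * (real q - real r' + 1)) / ((fact (p+2) * fact (q+1)) * fact r')"
      unfolding fr_def Suc using M by simp
    also have "\<dots> = A * real r * ((real p - real q + 1) * (real p - real r' + 2) * (real q - real r' + 1))"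
      by (subst sf) (auto simp: A_def Suc)
    finally show ?thesis using Suc by (simp add: algebra_simps)
  qed
  have L2: "(if q>r then fr p (q-1) r else 0) = A * (real q + 1) * ((real p - real q + 2) * (real p - real r + 2) * (real q - real r))"
  proof (cases "q > r")
    case False then show ?thesis using rq by simp
  next
    case True
    then obtain q' where Suc: "q = Suc q'" by (cases q) auto
    have M: "p + q' + r = M" using assms Suc by simp
    have "fr p (q-1) r = fact M * ((real p - real q' + 1) * (real p - real r + 2) * (real q' - real r + 1)) / ((fact (p+2) * fact r) * fact (q'+1))"
      unfolding fr_def Suc using M by (simp add: ac_simps)
    also have "\<dots> = A * (real q + 1) * ((real p - real q' + 1) * (real p - real r + 2) * (real q' - real r + 1))"
      by (subst sf) (auto simp: A_def Suc ac_simps)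
    finally show ?thesis using True Suc by (simp add: algebra_simps)
  qed
  have L1: "(if p>q then fr (p-1) q r else 0) = A * (real p + 2) * ((real p - real q) * (real p - real r + 1) * (real q - real r + 1))"
  proof (cases "p > q")
    case False then show ?thesis using qp by simp
  next
    case True
    then obtain p' where Suc: "p = Suc p'" by (cases p) auto
    have M: "p' + q + r = M" using assms Suc by simp
    have "fr (p-1) q r = fact M * ((real p' - real q + 1) * (real p' - real r + 2) * (real q - real r + 1)) / ((fact (q+1) * fact r) * fact (p'+2))"
      unfolding fr_def Suc using M by (simp add: ac_simps)
    also have "\<dots> = A * (real p + 2) * ((real p' - real q + 1) * (real p' - real r + 2) * (real q - real r + 1))"
      by (subst sf) (auto simp: A_def Suc ac_simps)
    finally show ?thesis using True Suc by (simp add: algebra_simps)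
  qed
  show ?thesis unfolding L0 L1 L2 L3 by (simp add: algebra_simps)
qed


lemma GS_zero: "\<not> (b \<le> a \<and> c \<le> b \<and> a \<le> x \<and> b \<le> y \<and> c \<le> z \<and> y \<le> x \<and> z \<le> y) \<Longrightarrow> card (GS a b c x y z) = 0"
  by (subst card_GS, erule if_not_P)

lemma closed: "r \<le> q \<Longrightarrow> q \<le> p \<Longrightarrow> p \<le> n \<Longrightarrow> real (card (GS (n-r) (n-q) (n-p) n n n)) = fr p q r"
proof (induction "p+q+r" arbitrary: p q r rule: less_induct)
  case less
  show ?case
  proof (cases "p+q+r")
    case 0
    then have "p = 0" "q = 0" "r = 0" by auto
    then show ?thesis
      by (subst card_GS) (simp add: GS_zero fr_def)
  next
    case (Suc M)
    have split: "card (GS (n-r) (n-q) (n-p) n n n) = card (GS (n-r+1) (n-q) (n-p) n n n)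
       + card (GS (n-r) (n-q+1) (n-p) n n n) + card (GS (n-r) (n-q) (n-p+1) n n n)"
      by (subst card_GS) (use less.prems Suc in auto)
    have t1: "real (card (GS (n-r+1) (n-q) (n-p) n n n)) = (if r>0 then fr p q (r-1) else 0)"
    proof (cases r)
      case 0 then show ?thesis by (simp add: GS_zero)
    next
      case (Suc r')
      have e: "n - r + 1 = n - r'" using Suc less.prems by simp
      show ?thesis unfolding e using less.hyps[of p q r'] less.prems Suc by simp
    qed
    have t2: "real (card (GS (n-r) (n-q+1) (n-p) n n n)) = (if q>r then fr p (q-1) r else 0)"
    proof (cases "q > r")
      case False then show ?thesis using less.prems by (simp add: GS_zero)
    next
      case True
      then obtain q' where Suc: "q = Suc q'" by (cases q) auto
      have e: "n - q + 1 = n - q'" using Suc less.prems by simp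
      show ?thesis unfolding e using less.hyps[of p q' r] less.prems Suc True by simp
    qed
    have t3: "real (card (GS (n-r) (n-q) (n-p+1) n n n)) = (if p>q then fr (p-1) q r else 0)"
    proof (cases "p > q")
      case False then show ?thesis using less.prems by (simp add: GS_zero)
    next
      case True
      then obtain p' where Suc: "p = Suc p'" by (cases p) auto
      have e: "n - p + 1 = n - p'" using Suc less.prems by simp
      show ?thesis unfolding e using less.hyps[of p' q r] less.prems Suc True by simp
    qed
    show ?thesis unfolding split of_nat_add t1 t2 t3
      using fr_rec[OF Suc] less.prems by simp
  qed
qed




lemma cnt_Suc: "cnt i (Suc k) w = cnt i k w + (if k < length w \<and> w!k = i then 1 else 0)"
proof (cases "k < length w")
  case True then show ?thesis by (simp add: cnt_def take_Suc_conv_app_nth)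
next
  case False then show ?thesis by (simp add: cnt_def)
qed

lemma cnt_mono: "k \<le> k' \<Longrightarrow> cnt i k w \<le> cnt i k' w"
proof (induction k' rule: dec_induct)
  case base then show ?case by simp
next
  case (step m) then show ?case by (simp add: cnt_Suc)
qed

lemma cnt_ge_len: "length w \<le> k \<Longrightarrow> cnt i k w = cnt i (length w) w"
  by (simp add: cnt_def)

lemma cnt_ivt: "j \<le> cnt i K w \<Longrightarrow> \<exists>k\<le>K. cnt i k w = j"
proof (induction K)
  case 0 then show ?case by simp
next
  case (Suc K)
  show ?case
  proof (cases "j \<le> cnt i K w")
    case True then show ?thesis using Suc.IH by (meson le_Suc_eq)
  next
    case False
    then have "j = cnt i (Suc K) w" using Suc.prems by (simp add: cnt_Suc split: if_splits)
    then show ?thesis by blast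
  qed
qed

lemma pos:
  assumes "1 \<le> j" "j \<le> cnt i (length w) w"
  defines "P \<equiv> (LEAST k. cnt i k w = j)"
  shows "1 \<le> P" "P \<le> length w" "w!(P-1) = i" "cnt i P w = j" "cnt i (P-1) w = j - 1"
proof -
  obtain k where k: "cnt i k w = j" using cnt_ivt[OF assms(2)] by blast
  have cP: "cnt i P w = j" unfolding P_def using k by (rule LeastI)
  have "P \<noteq> 0" using cP assms(1) by (metis cnt_0 not_one_le_zero)
  then obtain P' where P': "P = Suc P'" by (cases P) auto
  have "cnt i P' w \<noteq> j" using not_less_Least[of P' "\<lambda>k. cnt i k w = j"] P' unfolding P_def by simp
  moreover have "cnt i P w = cnt i P' w + (if P' < length w \<and> w!P' = i then 1 else 0)"
    unfolding P' by (rule cnt_Suc)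
  ultimately have h: "P' < length w" "w!P' = i" "cnt i P' w = j - 1" using cP by (auto split: if_splits)
  show "1 \<le> P" "P \<le> length w" "w!(P-1) = i" "cnt i P w = j" "cnt i (P-1) w = j - 1"
    using h P' cP by auto
qed

lemma least_pos:
  assumes "k < length w" "w!k = i"
  shows "(LEAST k'. cnt i k' w = cnt i (Suc k) w) = Suc k"
proof (rule Least_equality)
  fix y assume y: "cnt i y w = cnt i (Suc k) w"
  show "Suc k \<le> y"
  proof (rule ccontr)
    assume "\<not> Suc k \<le> y"
    then have "cnt i y w \<le> cnt i k w" by (intro cnt_mono) simp
    then show False using y assms by (simp add: cnt_Suc)
  qed
qed simp

definition toT :: "nat \<Rightarrow> nat list \<Rightarrow> (nat \<times> nat \<Rightarrow> nat)" where
  "toT n w = (\<lambda>c. if c \<in> cells3 n then (LEAST k. cnt (fst c) k w = snd c) else 0)"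

lemma cnt_len_sum: "set v \<subseteq> {1,2,3} \<Longrightarrow> length v = cnt 1 (length v) v + cnt 2 (length v) v + cnt 3 (length v) v"
proof (induction v)
  case Nil then show ?case by simp
next
  case (Cons u v)
  then have u: "u = 1 \<or> u = 2 \<or> u = 3" and "set v \<subseteq> {1,2,3}" by auto
  then have IH: "length v = cnt 1 (length v) v + cnt 2 (length v) v + cnt 3 (length v) v" using Cons.IH by blast
  show ?case using u IH by (elim disjE) simp_all
qed

lemma Wd_props:
  assumes "w \<in> GS 0 0 0 n n n"
  shows "length w = 3*n" "set w \<subseteq> {1,2,3}" "\<And>i. i \<in> {1,2,3} \<Longrightarrow> cnt i (length w) w = n"
    "\<And>k. cnt 2 k w \<le> cnt 1 k w" "\<And>k. cnt 3 k w \<le> cnt 2 k w"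
proof -
  have G: "Good 0 0 0 n n n w" using assms by (simp add: GS_def)
  show "length w = 3*n" using Good_len[OF G] by simp
  show "set w \<subseteq> {1,2,3}" using G unfolding Good_def by blast
  show "\<And>i. i \<in> {1,2,3} \<Longrightarrow> cnt i (length w) w = n" using G unfolding Good_def by auto
  show "\<And>k. cnt 2 k w \<le> cnt 1 k w" "\<And>k. cnt 3 k w \<le> cnt 2 k w" using G unfolding Good_def by auto
qed

lemma cells3_iff: "(i,j) \<in> cells3 n \<longleftrightarrow> i \<in> {1,2,3} \<and> 1 \<le> j \<and> j \<le> n"
  by (auto simp: cells3_def)

lemma toT_cell:
  assumes "w \<in> GS 0 0 0 n n n" "(i,j) \<in> cells3 n"
  shows "1 \<le> toT n w (i,j)" "toT n w (i,j) \<le> 3*n" "w!(toT n w (i,j) - 1) = i" "cnt i (toT n w (i,j)) w = j"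
proof -
  have ij: "i \<in> {1,2,3}" "1 \<le> j" "j \<le> n" using assms(2) cells3_iff by auto
  have "j \<le> cnt i (length w) w" using Wd_props(3)[OF assms(1) ij(1)] ij by simp
  note p = pos[OF ij(2) this]
  show "1 \<le> toT n w (i,j)" "toT n w (i,j) \<le> 3*n" "w!(toT n w (i,j) - 1) = i" "cnt i (toT n w (i,j)) w = j"
    using p assms Wd_props(1)[OF assms(1)] by (auto simp: toT_def)
qed

lemma toT_pos:
  assumes "w \<in> GS 0 0 0 n n n" "p < 3*n"
  shows "(w!p, cnt (w!p) (Suc p) w) \<in> cells3 n" "toT n w (w!p, cnt (w!p) (Suc p) w) = Suc p"
proof -
  have len: "length w = 3*n" using Wd_props(1)[OF assms(1)] .
  have "w!p \<in> set w" using assms(2) len by simp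
  then have i: "w!p \<in> {1,2,3}" using Wd_props(2)[OF assms(1)] by (rule subsetD[rotated])
  have j1: "1 \<le> cnt (w!p) (Suc p) w" using assms(2) len by (simp add: cnt_Suc)
  have "cnt (w!p) (Suc p) w \<le> cnt (w!p) (length w) w" using assms(2) len by (intro cnt_mono) simp
  then have j2: "cnt (w!p) (Suc p) w \<le> n" using Wd_props(3)[OF assms(1) i] by simp
  show c: "(w!p, cnt (w!p) (Suc p) w) \<in> cells3 n" unfolding cells3_iff using i j1 j2 by (intro conjI)
  show "toT n w (w!p, cnt (w!p) (Suc p) w) = Suc p"
    using c least_pos[of p w "w!p"] assms(2) len by (simp add: toT_def)
qed




lemma toT_SYT:
  assumes w: "w \<in> GS 0 0 0 n n n"
  shows "toT n w \<in> SYT3 n"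
proof -
  let ?T = "toT n w"
  have inj: "inj_on ?T (cells3 n)"
  proof (rule inj_onI)
    fix c d assume c: "c \<in> cells3 n" and d: "d \<in> cells3 n" and e: "?T c = ?T d"
    obtain i j where cij: "c = (i,j)" by (cases c)
    obtain i' j' where dij: "d = (i',j')" by (cases d)
    have c': "(i,j) \<in> cells3 n" and d': "(i',j') \<in> cells3 n" using c d cij dij by auto
    have e': "?T (i,j) = ?T (i',j')" using e cij dij by simp
    have ii: "i = i'" using toT_cell(3)[OF w c'] toT_cell(3)[OF w d'] e' by simp
    have "j = j'" using toT_cell(4)[OF w c'] toT_cell(4)[OF w d'] e' ii by metis
    then show "c = d" using ii cij dij by simp
  qed
  have img: "?T ` cells3 n = {1..3*n}"
  proof
    show "?T ` cells3 n \<subseteq> {1..3*n}"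
    proof
      fix k assume "k \<in> ?T ` cells3 n"
      then obtain c where c: "c \<in> cells3 n" "k = ?T c" by blast
      obtain i j where cij: "c = (i,j)" by (cases c)
      show "k \<in> {1..3*n}" using toT_cell(1,2)[OF w, of i j] c cij by simp
    qed
  next
    show "{1..3*n} \<subseteq> ?T ` cells3 n"
    proof
      fix k assume k: "k \<in> {1..3*n}"
      then have p: "k - 1 < 3*n" and kk: "Suc (k-1) = k" by auto
      show "k \<in> ?T ` cells3 n"
        using toT_pos[OF w p] kk by (metis image_eqI)
    qed
  qed
  have outside: "\<forall>c. c \<notin> cells3 n \<longrightarrow> ?T c = 0" by (simp add: toT_def)
  have row: "\<forall>a b. (a,b) \<in> cells3 n \<longrightarrow> (a,Suc b) \<in> cells3 n \<longrightarrow> ?T (a,b) < ?T (a, Suc b)"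
  proof (intro allI impI)
    fix a b assume c1: "(a,b) \<in> cells3 n" and c2: "(a,Suc b) \<in> cells3 n"
    show "?T (a,b) < ?T (a, Suc b)"
    proof (rule ccontr)
      assume "\<not> ?T (a,b) < ?T (a, Suc b)"
      then have "cnt a (?T (a, Suc b)) w \<le> cnt a (?T (a,b)) w" by (intro cnt_mono) simp
      then show False using toT_cell(4)[OF w c1] toT_cell(4)[OF w c2] by simp
    qed
  qed
  have col: "\<forall>a b. (a,b) \<in> cells3 n \<longrightarrow> (Suc a,b) \<in> cells3 n \<longrightarrow> ?T (a,b) < ?T (Suc a, b)"
  proof (intro allI impI)
    fix a b assume c1: "(a,b) \<in> cells3 n" and c2: "(Suc a,b) \<in> cells3 n"
    have a12: "a = 1 \<or> a = 2" using c1 c2 by (auto simp: cells3_def)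
    let ?P = "?T (Suc a, b)"
    have cP: "cnt (Suc a) ?P w = b" using toT_cell(4)[OF w c2] .
    have "cnt (Suc a) ?P w \<le> cnt a ?P w"
      using a12 Wd_props(4,5)[OF w] by (elim disjE) (simp_all add: numeral_2_eq_2 numeral_3_eq_3)
    then have "b \<le> cnt a ?P w" using cP by simp
    then obtain k where k: "k \<le> ?P" "cnt a k w = b" using cnt_ivt by blast
    have "?T (a,b) = (LEAST k. cnt a k w = b)" using c1 by (simp add: toT_def)
    also have "\<dots> \<le> k" using k(2) by (rule Least_le)
    finally have le: "?T (a,b) \<le> ?P" using k(1) by simp
    have "?T (a,b) \<noteq> ?P" using toT_cell(3)[OF w c1] toT_cell(3)[OF w c2] by auto
    then show "?T (a,b) < ?P" using le by simp
  qed
  have "bij_betw ?T (cells3 n) {1..3*n}" unfolding bij_betw_def using inj img by (intro conjI)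
  then show ?thesis unfolding SYT3_def using outside row col by (intro CollectI conjI)
qed


definition fromT :: "nat \<Rightarrow> (nat \<times> nat \<Rightarrow> nat) \<Rightarrow> nat list" where
  "fromT n T = map (\<lambda>k. fst (inv_into (cells3 n) T k)) [1..<3*n+1]"

lemma cnt_map: "k \<le> N \<Longrightarrow> cnt i k (map g [1..<N+1]) = card {m \<in> {1..k}. g m = i}"
proof -
  assume kN: "k \<le> N"
  have t: "take k [1..<N+1] = [1..<1+k]" by (rule take_upt) (use kN in simp)
  have "take k (map g [1..<N+1]) = map g [1..<k+1]" unfolding take_map t by (simp add: add.commute)
  then have "cnt i k (map g [1..<N+1]) = length (filter (\<lambda>x. g x = i) [1..<k+1])"
    by (simp add: cnt_def filter_map comp_def)
  also have "\<dots> = card ({x. g x = i} \<inter> set [1..<k+1])" by (rule distinct_length_filter) simp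
  also have "{x. g x = i} \<inter> set [1..<k+1] = {m \<in> {1..k}. g m = i}" by auto
  finally show ?thesis .
qed

lemma SYT_facts:
  assumes "T \<in> SYT3 n"
  shows "bij_betw T (cells3 n) {1..3*n}" "\<And>c. c \<notin> cells3 n \<Longrightarrow> T c = 0"
    "\<And>a b. (a, b) \<in> cells3 n \<Longrightarrow> (a, Suc b) \<in> cells3 n \<Longrightarrow> T (a, b) < T (a, Suc b)"
    "\<And>a b. (a, b) \<in> cells3 n \<Longrightarrow> (Suc a, b) \<in> cells3 n \<Longrightarrow> T (a, b) < T (Suc a, b)"
  using assms unfolding SYT3_def by blast+

lemma SYT_rc:
  assumes "T \<in> SYT3 n" "k \<in> {1..3*n}"
  shows "inv_into (cells3 n) T k \<in> cells3 n" "T (inv_into (cells3 n) T k) = k"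
proof -
  have "k \<in> T ` cells3 n" using bij_betw_imp_surj_on[OF SYT_facts(1)[OF assms(1)]] assms(2) by simp
  then show "inv_into (cells3 n) T k \<in> cells3 n" "T (inv_into (cells3 n) T k) = k"
    by (auto intro: inv_into_into f_inv_into_f)
qed

lemma SYT_rc2:
  assumes "T \<in> SYT3 n" "c \<in> cells3 n"
  shows "inv_into (cells3 n) T (T c) = c"
  using bij_betw_imp_inj_on[OF SYT_facts(1)[OF assms(1)]] assms(2) by (rule inv_into_f_f)

lemma SYT_row_mono:
  assumes "T \<in> SYT3 n" "(i,j) \<in> cells3 n" "(i,j') \<in> cells3 n" "j < j'"
  shows "T (i,j) < T (i,j')"
  using assms(3,4)
proof (induction j')
  case 0 then show ?case by simp
next
  case (Suc m)
  show ?case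
  proof (cases "j = m")
    case True then show ?thesis using SYT_facts(3)[OF assms(1) assms(2)] Suc.prems by simp
  next
    case False
    then have jm: "j < m" using Suc.prems by simp
    have cm: "(i,m) \<in> cells3 n" using assms(2) Suc.prems jm by (auto simp: cells3_def)
    have "T (i,j) < T (i,m)" using Suc.IH[OF cm jm] .
    also have "\<dots> < T (i, Suc m)" using SYT_facts(3)[OF assms(1) cm] Suc.prems by simp
    finally show ?thesis .
  qed
qed

lemma SYT_row_le:
  assumes "T \<in> SYT3 n" "(i,j) \<in> cells3 n" "(i,j') \<in> cells3 n"
  shows "T (i,j') \<le> T (i,j) \<longleftrightarrow> j' \<le> j"
  using SYT_row_mono[OF assms(1,2,3)] SYT_row_mono[OF assms(1,3,2)]
  by (cases j j' rule: linorder_cases) auto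

lemma cntT:
  assumes T: "T \<in> SYT3 n" and i: "i \<in> {1,2,3}" and k: "k \<le> 3*n"
  shows "cnt i k (fromT n T) = card {j\<in>{1..n}. T (i,j) \<le> k}"
proof -
  let ?rc = "inv_into (cells3 n) T"
  have "cnt i k (fromT n T) = card {m \<in> {1..k}. fst (?rc m) = i}"
    unfolding fromT_def using k by (rule cnt_map)
  also have "\<dots> = card {j\<in>{1..n}. T (i,j) \<le> k}"
  proof (rule sym, rule bij_betw_same_card[of "\<lambda>j. T (i,j)"])
    have cell: "j \<in> {1..n} \<Longrightarrow> (i,j) \<in> cells3 n" for j using i by (auto simp: cells3_def)
    show "bij_betw (\<lambda>j. T (i,j)) {j\<in>{1..n}. T (i,j) \<le> k} {m \<in> {1..k}. fst (?rc m) = i}"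
    proof (rule bij_betw_imageI)
      show "inj_on (\<lambda>j. T (i,j)) {j\<in>{1..n}. T (i,j) \<le> k}"
      proof (rule inj_onI)
        fix x y assume x: "x \<in> {j\<in>{1..n}. T (i,j) \<le> k}" and y: "y \<in> {j\<in>{1..n}. T (i,j) \<le> k}"
          and e: "T (i,x) = T (i,y)"
        have "(i,x) = (i,y)"
          using inj_onD[OF bij_betw_imp_inj_on[OF SYT_facts(1)[OF T]] e] cell x y by blast
        then show "x = y" by simp
      qed
    next
      show "(\<lambda>j. T (i,j)) ` {j\<in>{1..n}. T (i,j) \<le> k} = {m \<in> {1..k}. fst (?rc m) = i}"
      proof
        show "(\<lambda>j. T (i,j)) ` {j\<in>{1..n}. T (i,j) \<le> k} \<subseteq> {m \<in> {1..k}. fst (?rc m) = i}"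
        proof
          fix m assume "m \<in> (\<lambda>j. T (i,j)) ` {j\<in>{1..n}. T (i,j) \<le> k}"
          then obtain j where j: "j \<in> {1..n}" "T (i,j) \<le> k" "m = T (i,j)" by blast
          have c: "(i,j) \<in> cells3 n" using cell j(1) .
          have "T (i,j) \<in> {1..3*n}" using bij_betw_apply[OF SYT_facts(1)[OF T] c] .
          moreover have "?rc (T (i,j)) = (i,j)" using SYT_rc2[OF T c] .
          ultimately show "m \<in> {m \<in> {1..k}. fst (?rc m) = i}" using j by simp
        qed
      next
        show "{m \<in> {1..k}. fst (?rc m) = i} \<subseteq> (\<lambda>j. T (i,j)) ` {j\<in>{1..n}. T (i,j) \<le> k}"
        proof
          fix m assume m: "m \<in> {m \<in> {1..k}. fst (?rc m) = i}"
          then have m3: "m \<in> {1..3*n}" using k by auto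
          obtain a j where aj: "?rc m = (a,j)" by (cases "?rc m")
          have a: "a = i" using m aj by simp
          have c: "(i,j) \<in> cells3 n" using SYT_rc(1)[OF T m3] aj a by simp
          have Tm: "T (i,j) = m" using SYT_rc(2)[OF T m3] aj a by simp
          have "j \<in> {1..n}" using c by (auto simp: cells3_def)
          then show "m \<in> (\<lambda>j. T (i,j)) ` {j\<in>{1..n}. T (i,j) \<le> k}" using Tm m by force
        qed
      qed
    qed
  qed
  finally show ?thesis .
qed


lemma fromT_len: "length (fromT n T) = 3*n" by (simp add: fromT_def)

lemma cnt_min: "cnt i k (fromT n T) = cnt i (min k (3*n)) (fromT n T)"
proof (cases "k \<le> 3*n")
  case True then show ?thesis by simp
next
  case False
  then show ?thesis using cnt_ge_len[of "fromT n T" k i] fromT_len[of n T] by simp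
qed

lemma ballotT:
  assumes T: "T \<in> SYT3 n" and a: "a = 1 \<or> a = 2"
  shows "cnt (Suc a) k (fromT n T) \<le> cnt a k (fromT n T)"
proof -
  let ?k = "min k (3*n)"
  have ia: "a \<in> {1,2,3}" "Suc a \<in> {1,2,3}" using a by auto
  have "{j\<in>{1..n}. T (Suc a,j) \<le> ?k} \<subseteq> {j\<in>{1..n}. T (a,j) \<le> ?k}"
  proof
    fix j assume j: "j \<in> {j\<in>{1..n}. T (Suc a,j) \<le> ?k}"
    have "(a,j) \<in> cells3 n" "(Suc a,j) \<in> cells3 n" using j a by (auto simp: cells3_def)
    then have "T (a,j) < T (Suc a, j)" using SYT_facts(4)[OF T] by blast
    then show "j \<in> {j\<in>{1..n}. T (a,j) \<le> ?k}" using j by auto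
  qed
  then have "card {j\<in>{1..n}. T (Suc a,j) \<le> ?k} \<le> card {j\<in>{1..n}. T (a,j) \<le> ?k}"
    by (intro card_mono) auto
  then show ?thesis
    using cntT[OF T ia(1), of ?k] cntT[OF T ia(2), of ?k] cnt_min[of "Suc a" k n T] cnt_min[of a k n T] by simp
qed

lemma totalT:
  assumes T: "T \<in> SYT3 n" and i: "i \<in> {1,2,3}"
  shows "cnt i (3*n) (fromT n T) = n"
proof -
  have "{j\<in>{1..n}. T (i,j) \<le> 3*n} = {1..n}"
  proof (intro set_eqI iffI)
    fix j assume j: "j \<in> {1..n}"
    have "(i,j) \<in> cells3 n" using i j by (auto simp: cells3_def)
    then have "T (i,j) \<in> {1..3*n}" using bij_betw_apply[OF SYT_facts(1)[OF T]] by blast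
    then show "j \<in> {j\<in>{1..n}. T (i,j) \<le> 3*n}" using j by simp
  qed simp
  then show ?thesis using cntT[OF T i, of "3*n"] by simp
qed

lemma fromT_Wd:
  assumes T: "T \<in> SYT3 n"
  shows "fromT n T \<in> GS 0 0 0 n n n"
proof -
  let ?w = "fromT n T"
  have s: "set ?w \<subseteq> {1,2,3}"
  proof
    fix x assume "x \<in> set ?w"
    then obtain k where k0: "k \<in> set [1..<3*n+1]" "x = fst (inv_into (cells3 n) T k)"
      unfolding fromT_def set_map by blast
    then have k: "k \<in> {1..3*n}" "x = fst (inv_into (cells3 n) T k)" by auto
    then show "x \<in> {1,2,3}" using SYT_rc(1)[OF T k(1)] by (auto simp: cells3_def)
  qed
  have b1: "\<forall>k. cnt 2 k ?w \<le> cnt 1 k ?w" using ballotT[OF T, of 1] by (simp add: numeral_2_eq_2)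
  have b2: "\<forall>k. cnt 3 k ?w \<le> cnt 2 k ?w" using ballotT[OF T, of 2] by (simp add: numeral_2_eq_2 numeral_3_eq_3)
  have t: "cnt 1 (length ?w) ?w = n" "cnt 2 (length ?w) ?w = n" "cnt 3 (length ?w) ?w = n"
    using totalT[OF T] fromT_len[of n T] by auto
  show ?thesis unfolding GS_def Good_def using s b1 b2 t by simp
qed

lemma toT_fromT:
  assumes T: "T \<in> SYT3 n"
  shows "toT n (fromT n T) = T"
proof
  fix c
  show "toT n (fromT n T) c = T c"
  proof (cases "c \<in> cells3 n")
    case False then show ?thesis using SYT_facts(2)[OF T] by (simp add: toT_def)
  next
    case True
    obtain i j where cij: "c = (i,j)" by (cases c)
    have c: "(i,j) \<in> cells3 n" using True cij by simp
    have i: "i \<in> {1,2,3}" and j: "1 \<le> j" "j \<le> n" using c by (auto simp: cells3_def)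
    have Tr: "T (i,j) \<in> {1..3*n}" using bij_betw_apply[OF SYT_facts(1)[OF T] c] .
    have "(LEAST k. cnt i k (fromT n T) = j) = T (i,j)"
    proof (rule Least_equality)
      have "{j'\<in>{1..n}. T (i,j') \<le> T (i,j)} = {1..j}"
      proof (intro set_eqI iffI)
        fix j' assume "j' \<in> {j'\<in>{1..n}. T (i,j') \<le> T (i,j)}"
        then have "(i,j') \<in> cells3 n" "T (i,j') \<le> T (i,j)" "1 \<le> j'" using i by (auto simp: cells3_def)
        then show "j' \<in> {1..j}" using SYT_row_le[OF T c] by simp
      next
        fix j' assume jj: "j' \<in> {1..j}"
        then have c': "(i,j') \<in> cells3 n" using i j by (auto simp: cells3_def)
        then have "T (i,j') \<le> T (i,j)" using SYT_row_le[OF T c c'] jj by simp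
        then show "j' \<in> {j'\<in>{1..n}. T (i,j') \<le> T (i,j)}" using jj j by simp
      qed
      then show "cnt i (T (i,j)) (fromT n T) = j" using cntT[OF T i, of "T (i,j)"] Tr by simp
    next
      fix y assume y: "cnt i y (fromT n T) = j"
      show "T (i,j) \<le> y"
      proof (rule ccontr)
        assume "\<not> T (i,j) \<le> y"
        then have yl: "y < T (i,j)" by simp
        have "{j'\<in>{1..n}. T (i,j') \<le> y} \<subseteq> {1..j-1}"
        proof
          fix j' assume jj: "j' \<in> {j'\<in>{1..n}. T (i,j') \<le> y}"
          then have c': "(i,j') \<in> cells3 n" using i by (auto simp: cells3_def)
          have "\<not> j \<le> j'"
          proof
            assume "j \<le> j'"
            then have "T (i,j) \<le> T (i,j')" using SYT_row_le[OF T c' c] by simp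
            then show False using jj yl by simp
          qed
          then show "j' \<in> {1..j-1}" using jj by auto
        qed
        then have "card {j'\<in>{1..n}. T (i,j') \<le> y} \<le> card {1..j-1}"
          by (rule card_mono[rotated]) simp
        then have "card {j'\<in>{1..n}. T (i,j') \<le> y} \<le> j - 1" by simp
        moreover have "cnt i y (fromT n T) = card {j'\<in>{1..n}. T (i,j') \<le> y}"
          using cntT[OF T i, of y] yl Tr by simp
        ultimately show False using y j by simp
      qed
    qed
    then show ?thesis using c cij by (simp add: toT_def)
  qed
qed

lemma bij_toT: "bij_betw (toT n) (GS 0 0 0 n n n) (SYT3 n)"
proof -
  have inj: "inj_on (toT n) (GS 0 0 0 n n n)"
  proof (rule inj_onI)
    fix w w' assume w: "w \<in> GS 0 0 0 n n n" and w': "w' \<in> GS 0 0 0 n n n" and e: "toT n w = toT n w'"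
    have lw: "length w = 3*n" and lw': "length w' = 3*n" using Wd_props(1) w w' by auto
    show "w = w'"
    proof (rule nth_equalityI)
      show "length w = length w'" using lw lw' by simp
    next
      fix p assume "p < length w"
      then have p: "p < 3*n" using lw by simp
      have injT: "inj_on (toT n w) (cells3 n)"
        using SYT_facts(1)[OF toT_SYT[OF w]] by (rule bij_betw_imp_inj_on)
      have "toT n w (w!p, cnt (w!p) (Suc p) w) = toT n w (w'!p, cnt (w'!p) (Suc p) w')"
        using toT_pos(2)[OF w p] toT_pos(2)[OF w' p] e by simp
      then have "(w!p, cnt (w!p) (Suc p) w) = (w'!p, cnt (w'!p) (Suc p) w')"
        using inj_onD[OF injT] toT_pos(1)[OF w p] toT_pos(1)[OF w' p] by blast
      then show "w!p = w'!p" by simp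
    qed
  qed
  have "toT n ` GS 0 0 0 n n n = SYT3 n"
  proof
    show "toT n ` GS 0 0 0 n n n \<subseteq> SYT3 n" using toT_SYT by blast
    show "SYT3 n \<subseteq> toT n ` GS 0 0 0 n n n"
    proof
      fix T assume T: "T \<in> SYT3 n"
      then show "T \<in> toT n ` GS 0 0 0 n n n" using toT_fromT[OF T] fromT_Wd[OF T] by (metis image_eqI)
    qed
  qed
  then show ?thesis using inj by (simp add: bij_betw_def)
qed

lemma event_iff:
  assumes w: "w \<in> GS 0 0 0 n n n" and n: "3 \<le> n"
  shows "toT n w (3,3) = 13 \<longleftrightarrow> 12 < length w \<and> w!12 = 3 \<and> cnt 3 12 w = 2"
proof
  have c: "(3,3) \<in> cells3 n" using n by (simp add: cells3_def)
  {
    assume h: "toT n w (3,3) = 13"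
    show "12 < length w \<and> w!12 = 3 \<and> cnt 3 12 w = 2"
    proof -
      have j: "1 \<le> (3::nat)" "3 \<le> cnt 3 (length w) w" using Wd_props(3)[OF w, of 3] n by auto
      have P: "(LEAST k. cnt 3 k w = 3) = 13" using h c by (simp add: toT_def)
      show ?thesis using pos[OF j] unfolding P by simp
    qed
  }
  {
    assume h: "12 < length w \<and> w!12 = 3 \<and> cnt 3 12 w = 2"
    have "cnt 3 13 w = 3" using h cnt_Suc[of 3 12 w] by simp
    moreover have "(LEAST k'. cnt 3 k' w = cnt 3 (Suc 12) w) = Suc 12" using h by (intro least_pos) auto
    ultimately show "toT n w (3,3) = 13" using c by (simp add: toT_def)
  }
qed

lemma card_SYT: "card (SYT3 n) = card (GS 0 0 0 n n n)"
  using bij_betw_same_card[OF bij_toT] by simp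




lemma card_event:
  assumes n: "3 \<le> n"
  shows "card {T \<in> SYT3 n. T (3,3) = 13} = card {w \<in> GS 0 0 0 n n n. 12 < length w \<and> w!12 = 3 \<and> cnt 3 12 w = 2}"
proof -
  have b: "bij_betw (toT n) (GS 0 0 0 n n n) (SYT3 n)" by (rule bij_toT)
  have im: "toT n ` GS 0 0 0 n n n = SYT3 n" using b by (rule bij_betw_imp_surj_on)
  have e1: "{T \<in> SYT3 n. T (3,3) = 13} = toT n ` {w \<in> GS 0 0 0 n n n. toT n w (3,3) = 13}"
  proof (intro set_eqI iffI)
    fix T assume "T \<in> {T \<in> SYT3 n. T (3,3) = 13}"
    then have T: "T \<in> SYT3 n" "T (3,3) = 13" by auto
    have "T \<in> toT n ` GS 0 0 0 n n n" using T(1) im by simp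
    then obtain w where w: "w \<in> GS 0 0 0 n n n" "T = toT n w" by (rule imageE)
    then show "T \<in> toT n ` {w \<in> GS 0 0 0 n n n. toT n w (3,3) = 13}" using T(2) by simp
  next
    fix T assume "T \<in> toT n ` {w \<in> GS 0 0 0 n n n. toT n w (3,3) = 13}"
    then obtain w where w0: "w \<in> {w \<in> GS 0 0 0 n n n. toT n w (3,3) = 13}" "T = toT n w" by (rule imageE)
    then have w: "w \<in> GS 0 0 0 n n n" "toT n w (3,3) = 13" "T = toT n w" by auto
    then show "T \<in> {T \<in> SYT3 n. T (3,3) = 13}" using toT_SYT[OF w(1)] by simp
  qed
  have e2: "card (toT n ` {w \<in> GS 0 0 0 n n n. toT n w (3,3) = 13}) = card {w \<in> GS 0 0 0 n n n. toT n w (3,3) = 13}"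
  proof (rule card_image)
    show "inj_on (toT n) {w \<in> GS 0 0 0 n n n. toT n w (3,3) = 13}"
      by (rule inj_on_subset[OF bij_betw_imp_inj_on[OF b]]) simp
  qed
  have e3: "{w \<in> GS 0 0 0 n n n. toT n w (3,3) = 13} = {w \<in> GS 0 0 0 n n n. 12 < length w \<and> w!12 = 3 \<and> cnt 3 12 w = 2}"
  proof (rule Collect_cong)
    fix w show "(w \<in> GS 0 0 0 n n n \<and> toT n w (3,3) = 13) = (w \<in> GS 0 0 0 n n n \<and> 12 < length w \<and> w!12 = 3 \<and> cnt 3 12 w = 2)"
    proof (cases "w \<in> GS 0 0 0 n n n")
      case True then show ?thesis using event_iff[OF True n] by simp
    qed simp
  qed
  show ?thesis by (subst e1, subst e2, subst e3, rule refl)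
qed




lemma Good_append: "Good a b c x y z (u @ v) \<longleftrightarrow> (\<exists>x' y' z'. Good a b c x' y' z' u \<and> Good x' y' z' x y z v)"
proof (induction u arbitrary: a b c)
  case Nil
  show ?case
  proof
    assume "Good a b c x y z ([] @ v)"
    then have "Good a b c x y z v" "b \<le> a" "c \<le> b" using Good_bounds by auto
    then show "\<exists>x' y' z'. Good a b c x' y' z' [] \<and> Good x' y' z' x y z v" by (auto simp: Good_Nil)
  next
    assume "\<exists>x' y' z'. Good a b c x' y' z' [] \<and> Good x' y' z' x y z v"
    then show "Good a b c x y z ([] @ v)" by (auto simp: Good_Nil)
  qed
next
  case (Cons w u)
  show ?case unfolding append_Cons Good_Cons Cons.IH by auto
qed

lemma take_append_len: "length u = k \<Longrightarrow> cnt i k (u @ r) = cnt i (length u) u"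
  by (simp add: cnt_def)

lemma pre_props:
  assumes "u \<in> GS 0 0 0 c1 (10-c1) 2" "c1 \<le> 10"
  shows "length u = 12" "cnt 3 12 (u @ r) = 2" "cnt 1 12 (u @ r) = c1"
proof -
  have G: "Good 0 0 0 c1 (10-c1) 2 u" using assms by (simp add: GS_def)
  show l: "length u = 12" using Good_len[OF G] assms(2) by simp
  show "cnt 3 12 (u @ r) = 2" "cnt 1 12 (u @ r) = c1"
    using take_append_len[OF l] G unfolding Good_def by auto
qed

definition EV where "EV n = {w \<in> GS 0 0 0 n n n. 12 < length w \<and> w!12 = 3 \<and> cnt 3 12 w = 2}"

definition AC where "AC n c1 = (\<lambda>(u,v). u @ 3 # v) ` (GS 0 0 0 c1 (10-c1) 2 \<times> GS c1 (10-c1) 3 n n n)"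

lemma AC_elim:
  assumes "w \<in> AC n c1"
  obtains u v where "u \<in> GS 0 0 0 c1 (10-c1) 2" "v \<in> GS c1 (10-c1) 3 n n n" "w = u @ 3 # v"
proof -
  from assms obtain p where p: "p \<in> GS 0 0 0 c1 (10-c1) 2 \<times> GS c1 (10-c1) 3 n n n" "w = (\<lambda>(u,v). u @ 3 # v) p"
    unfolding AC_def by (rule imageE)
  obtain u v where "p = (u,v)" by (cases p)
  then have "u \<in> GS 0 0 0 c1 (10-c1) 2" "v \<in> GS c1 (10-c1) 3 n n n" "w = u @ 3 # v" using p by auto
  then show ?thesis by (rule that)
qed

lemma EV_decomp: "EV n = (\<Union>c1\<in>{5,6,7}. AC n c1)"
proof (intro set_eqI iffI)
  fix w assume "w \<in> EV n"
  then have w: "Good 0 0 0 n n n w" "12 < length w" "w!12 = 3" "cnt 3 12 w = 2"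
    by (auto simp: EV_def GS_def)
  define u where "u = take 12 w"
  define v where "v = drop 13 w"
  have wuv: "w = u @ 3 # v" unfolding u_def v_def using id_take_nth_drop[OF w(2)] w(3) by simp
  have lu: "length u = 12" using w(2) by (simp add: u_def)
  have "Good 0 0 0 n n n (u @ 3 # v)" using w(1) wuv by simp
  from this[unfolded Good_append] obtain x' y' z' where g1: "Good 0 0 0 x' y' z' u" and g2: "Good x' y' z' n n n (3 # v)"
    by blast
  have z1: "0 + cnt 3 (length u) u = z'" using g1 unfolding Good_def by blast
  have "cnt 3 12 w = cnt 3 (length u) u" using take_append_len[OF lu, of 3 "3 # v"] wuv by simp
  then have z: "z' = 2" using z1 w(4) by simp
  have s: "x' + y' + z' = 12" using Good_len[OF g1] lu by simp
  have g2': "Good x' y' 3 n n n v" and b: "y' \<le> x'" "2 \<le> y'" using g2 z by (auto simp: Good_Cons)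
  have b2: "3 \<le> y'" using Good_bounds[OF g2'] by simp
  have y: "y' = 10 - x'" using s z by simp
  have c1: "x' \<in> {5,6,7}" using s z b b2 by auto
  have "(u, v) \<in> GS 0 0 0 x' (10-x') 2 \<times> GS x' (10-x') 3 n n n"
    using g1 g2' z y by (simp add: GS_def)
  then have "w \<in> AC n x'" unfolding AC_def wuv by (rule rev_image_eqI) simp
  then show "w \<in> (\<Union>c1\<in>{5,6,7}. AC n c1)" using c1 by blast
next
  fix w assume "w \<in> (\<Union>c1\<in>{5,6,7}. AC n c1)"
  then obtain c1 where c1: "c1 \<in> {5,6,7}" and wc: "w \<in> AC n c1" by blast
  obtain u v where u: "u \<in> GS 0 0 0 c1 (10-c1) 2"
      and v: "v \<in> GS c1 (10-c1) 3 n n n" and wuv: "w = u @ 3 # v"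
    using wc by (rule AC_elim)
  have c10: "c1 \<le> 10" using c1 by auto
  have gu: "Good 0 0 0 c1 (10-c1) 2 u" using u by (simp add: GS_def)
  have gv: "Good c1 (10-c1) 3 n n n v" using v by (simp add: GS_def)
  have "Good c1 (10-c1) 2 n n n (3 # v)" using gv c1 by (auto simp: Good_Cons)
  then have g: "Good 0 0 0 n n n w" unfolding wuv Good_append using gu by blast
  have lu: "length u = 12" using pre_props(1)[OF u c10] .
  have "12 < length w" "w!12 = 3" using lu wuv by (auto simp: nth_append)
  moreover have "cnt 3 12 w = 2" using pre_props(2)[OF u c10] wuv by simp
  ultimately show "w \<in> EV n" using g by (simp add: EV_def GS_def)
qed

lemma card_AC: "c1 \<le> 10 \<Longrightarrow> card (AC n c1) = card (GS 0 0 0 c1 (10-c1) 2) * card (GS c1 (10-c1) 3 n n n)"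
proof -
  assume c10: "c1 \<le> 10"
  have "inj_on (\<lambda>(u,v). u @ 3 # v) (GS 0 0 0 c1 (10-c1) 2 \<times> GS c1 (10-c1) 3 n n n)"
  proof (rule inj_onI)
    fix p q assume p: "p \<in> GS 0 0 0 c1 (10-c1) 2 \<times> GS c1 (10-c1) 3 n n n"
      and q: "q \<in> GS 0 0 0 c1 (10-c1) 2 \<times> GS c1 (10-c1) 3 n n n"
      and e: "(\<lambda>(u,v). u @ 3 # v) p = (\<lambda>(u,v). u @ 3 # v) q"
    obtain u v where puv: "p = (u,v)" by (cases p)
    obtain u' v' where quv: "q = (u',v')" by (cases q)
    have "length u = 12" "length u' = 12" using pre_props(1) c10 p q puv quv by auto
    then show "p = q" using e puv quv by auto
  qed
  then show ?thesis unfolding AC_def by (simp add: card_image card_cartesian_product)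
qed

lemma card_EV: "card (EV n) = card (GS 0 0 0 5 5 2) * card (GS 5 5 3 n n n)
   + card (GS 0 0 0 6 4 2) * card (GS 6 4 3 n n n) + card (GS 0 0 0 7 3 2) * card (GS 7 3 3 n n n)"
proof -
  have "card (EV n) = (\<Sum>c1\<in>{5,6,7}. card (AC n c1))"
    unfolding EV_decomp
  proof (rule card_UN_disjoint)
    show "finite {5::nat,6,7}" by simp
    show "\<forall>i\<in>{5::nat,6,7}. finite (AC n i)" unfolding AC_def using GS_finite by simp
    show "\<forall>i\<in>{5::nat,6,7}. \<forall>j\<in>{5,6,7}. i \<noteq> j \<longrightarrow> AC n i \<inter> AC n j = {}"
    proof (intro ballI impI)
      fix i j :: nat assume i: "i \<in> {5,6,7}" and j: "j \<in> {5,6,7}" and ij: "i \<noteq> j"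
      show "AC n i \<inter> AC n j = {}"
      proof (rule ccontr)
        assume "AC n i \<inter> AC n j \<noteq> {}"
        then obtain w where wi: "w \<in> AC n i" and wj: "w \<in> AC n j" by blast
        obtain u v where u: "u \<in> GS 0 0 0 i (10-i) 2" and wuv: "w = u @ 3 # v"
          using wi by (rule AC_elim)
        obtain u' v' where u': "u' \<in> GS 0 0 0 j (10-j) 2" and wuv': "w = u' @ 3 # v'"
          using wj by (rule AC_elim)
        have "cnt 1 12 w = i" using pre_props(3)[OF u] i wuv by auto
        moreover have "cnt 1 12 w = j" using pre_props(3)[OF u'] j wuv' by auto
        ultimately show False using ij by simp
      qed
    qed
  qed
  also have "\<dots> = card (GS 0 0 0 5 5 2) * card (GS 5 5 3 n n n)
   + card (GS 0 0 0 6 4 2) * card (GS 6 4 3 n n n) + card (GS 0 0 0 7 3 2) * card (GS 7 3 3 n n n)"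
    by (simp add: card_AC)
  finally show ?thesis .
qed




lemma add_0_1: "(0::nat) + 1 = 1" by simp

lemma add_1_1: "(1::nat) + 1 = 2" by simp

lemma add_2_1: "(2::nat) + 1 = 3" by simp

lemma add_3_1: "(3::nat) + 1 = 4" by simp

lemma add_4_1: "(4::nat) + 1 = 5" by simp

lemma add_5_1: "(5::nat) + 1 = 6" by simp

lemma add_6_1: "(6::nat) + 1 = 7" by simp

lemma add_7_1: "(7::nat) + 1 = 8" by simp

lemma add_8_1: "(8::nat) + 1 = 9" by simp

lemma add_9_1: "(9::nat) + 1 = 10" by simp

lemmas pl = add_0_1 add_1_1 add_2_1 add_3_1 add_4_1 add_5_1 add_6_1 add_7_1 add_8_1 add_9_1
named_theorems pcs_5_5_2

lemma pc_5_5_3_5_5_2 [pcs_5_5_2]: "card (GS 5 5 3 5 5 2) = 0"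
  by (rule GS_zero) simp

lemma pc_6_5_2_5_5_2 [pcs_5_5_2]: "card (GS 6 5 2 5 5 2) = 0"
  by (rule GS_zero) simp

lemma pc_5_6_2_5_5_2 [pcs_5_5_2]: "card (GS 5 6 2 5 5 2) = 0"
  by (rule GS_zero) simp

lemma pc_5_6_1_5_5_2 [pcs_5_5_2]: "card (GS 5 6 1 5 5 2) = 0"
  by (rule GS_zero) simp

lemma pc_5_4_3_5_5_2 [pcs_5_5_2]: "card (GS 5 4 3 5 5 2) = 0"
  by (rule GS_zero) simp

lemma pc_5_5_2_5_5_2 [pcs_5_5_2]: "card (GS 5 5 2 5 5 2) = 1"
  by (rule trans[OF card_GS[of 5 5 2 5 5 2, unfolded pl]]) (simp add: pcs_5_5_2 del: One_nat_def)

lemma pc_6_5_1_5_5_2 [pcs_5_5_2]: "card (GS 6 5 1 5 5 2) = 0"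
  by (rule GS_zero) simp

lemma pc_6_4_2_5_5_2 [pcs_5_5_2]: "card (GS 6 4 2 5 5 2) = 0"
  by (rule GS_zero) simp

lemma pc_5_3_3_5_5_2 [pcs_5_5_2]: "card (GS 5 3 3 5 5 2) = 0"
  by (rule GS_zero) simp

lemma pc_5_4_2_5_5_2 [pcs_5_5_2]: "card (GS 5 4 2 5 5 2) = 1"
  by (rule trans[OF card_GS[of 5 4 2 5 5 2, unfolded pl]]) (simp add: pcs_5_5_2 del: One_nat_def)

lemma pc_4_4_3_5_5_2 [pcs_5_5_2]: "card (GS 4 4 3 5 5 2) = 0"
  by (rule GS_zero) simp

lemma pc_5_6_0_5_5_2 [pcs_5_5_2]: "card (GS 5 6 0 5 5 2) = 0"
  by (rule GS_zero) simp

lemma pc_6_5_0_5_5_2 [pcs_5_5_2]: "card (GS 6 5 0 5 5 2) = 0"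
  by (rule GS_zero) simp

lemma pc_6_4_1_5_5_2 [pcs_5_5_2]: "card (GS 6 4 1 5 5 2) = 0"
  by (rule GS_zero) simp

lemma pc_6_3_2_5_5_2 [pcs_5_5_2]: "card (GS 6 3 2 5 5 2) = 0"
  by (rule GS_zero) simp

lemma pc_4_5_2_5_5_2 [pcs_5_5_2]: "card (GS 4 5 2 5 5 2) = 0"
  by (rule GS_zero) simp

lemma pc_5_5_1_5_5_2 [pcs_5_5_2]: "card (GS 5 5 1 5 5 2) = 1"
  by (rule trans[OF card_GS[of 5 5 1 5 5 2, unfolded pl]]) (simp add: pcs_5_5_2 del: One_nat_def)

lemma pc_6_2_2_5_5_2 [pcs_5_5_2]: "card (GS 6 2 2 5 5 2) = 0"
  by (rule GS_zero) simp

lemma pc_5_5_0_5_5_2 [pcs_5_5_2]: "card (GS 5 5 0 5 5 2) = 1"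
  by (rule trans[OF card_GS[of 5 5 0 5 5 2, unfolded pl]]) (simp add: pcs_5_5_2 del: One_nat_def)

lemma pc_5_3_2_5_5_2 [pcs_5_5_2]: "card (GS 5 3 2 5 5 2) = 1"
  by (rule trans[OF card_GS[of 5 3 2 5 5 2, unfolded pl]]) (simp add: pcs_5_5_2 del: One_nat_def)

lemma pc_5_4_1_5_5_2 [pcs_5_5_2]: "card (GS 5 4 1 5 5 2) = 2"
  by (rule trans[OF card_GS[of 5 4 1 5 5 2, unfolded pl]]) (simp add: pcs_5_5_2 del: One_nat_def)

lemma pc_6_3_1_5_5_2 [pcs_5_5_2]: "card (GS 6 3 1 5 5 2) = 0"
  by (rule GS_zero) simp

lemma pc_5_2_3_5_5_2 [pcs_5_5_2]: "card (GS 5 2 3 5 5 2) = 0"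
  by (rule GS_zero) simp

lemma pc_4_4_2_5_5_2 [pcs_5_5_2]: "card (GS 4 4 2 5 5 2) = 1"
  by (rule trans[OF card_GS[of 4 4 2 5 5 2, unfolded pl]]) (simp add: pcs_5_5_2 del: One_nat_def)

lemma pc_4_5_1_5_5_2 [pcs_5_5_2]: "card (GS 4 5 1 5 5 2) = 0"
  by (rule GS_zero) simp

lemma pc_4_3_3_5_5_2 [pcs_5_5_2]: "card (GS 4 3 3 5 5 2) = 0"
  by (rule GS_zero) simp

lemma pc_6_4_0_5_5_2 [pcs_5_5_2]: "card (GS 6 4 0 5 5 2) = 0"
  by (rule GS_zero) simp

lemma pc_3_3_3_5_5_2 [pcs_5_5_2]: "card (GS 3 3 3 5 5 2) = 0"
  by (rule GS_zero) simp

lemma pc_3_4_2_5_5_2 [pcs_5_5_2]: "card (GS 3 4 2 5 5 2) = 0"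
  by (rule GS_zero) simp

lemma pc_5_4_0_5_5_2 [pcs_5_5_2]: "card (GS 5 4 0 5 5 2) = 3"
  by (rule trans[OF card_GS[of 5 4 0 5 5 2, unfolded pl]]) (simp add: pcs_5_5_2 del: One_nat_def)

lemma pc_6_3_0_5_5_2 [pcs_5_5_2]: "card (GS 6 3 0 5 5 2) = 0"
  by (rule GS_zero) simp

lemma pc_5_2_2_5_5_2 [pcs_5_5_2]: "card (GS 5 2 2 5 5 2) = 1"
  by (rule trans[OF card_GS[of 5 2 2 5 5 2, unfolded pl]]) (simp add: pcs_5_5_2 del: One_nat_def)

lemma pc_6_2_1_5_5_2 [pcs_5_5_2]: "card (GS 6 2 1 5 5 2) = 0"
  by (rule GS_zero) simp

lemma pc_4_4_1_5_5_2 [pcs_5_5_2]: "card (GS 4 4 1 5 5 2) = 3"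
  by (rule trans[OF card_GS[of 4 4 1 5 5 2, unfolded pl]]) (simp add: pcs_5_5_2 del: One_nat_def)

lemma pc_4_5_0_5_5_2 [pcs_5_5_2]: "card (GS 4 5 0 5 5 2) = 0"
  by (rule GS_zero) simp

lemma pc_4_3_2_5_5_2 [pcs_5_5_2]: "card (GS 4 3 2 5 5 2) = 2"
  by (rule trans[OF card_GS[of 4 3 2 5 5 2, unfolded pl]]) (simp add: pcs_5_5_2 del: One_nat_def)

lemma pc_4_2_3_5_5_2 [pcs_5_5_2]: "card (GS 4 2 3 5 5 2) = 0"
  by (rule GS_zero) simp

lemma pc_5_3_1_5_5_2 [pcs_5_5_2]: "card (GS 5 3 1 5 5 2) = 3"
  by (rule trans[OF card_GS[of 5 3 1 5 5 2, unfolded pl]]) (simp add: pcs_5_5_2 del: One_nat_def)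

lemma pc_3_3_2_5_5_2 [pcs_5_5_2]: "card (GS 3 3 2 5 5 2) = 2"
  by (rule trans[OF card_GS[of 3 3 2 5 5 2, unfolded pl]]) (simp add: pcs_5_5_2 del: One_nat_def)

lemma pc_6_2_0_5_5_2 [pcs_5_5_2]: "card (GS 6 2 0 5 5 2) = 0"
  by (rule GS_zero) simp

lemma pc_6_1_1_5_5_2 [pcs_5_5_2]: "card (GS 6 1 1 5 5 2) = 0"
  by (rule GS_zero) simp

lemma pc_4_3_1_5_5_2 [pcs_5_5_2]: "card (GS 4 3 1 5 5 2) = 8"
  by (rule trans[OF card_GS[of 4 3 1 5 5 2, unfolded pl]]) (simp add: pcs_5_5_2 del: One_nat_def)

lemma pc_4_2_2_5_5_2 [pcs_5_5_2]: "card (GS 4 2 2 5 5 2) = 3"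
  by (rule trans[OF card_GS[of 4 2 2 5 5 2, unfolded pl]]) (simp add: pcs_5_5_2 del: One_nat_def)

lemma pc_5_3_0_5_5_2 [pcs_5_5_2]: "card (GS 5 3 0 5 5 2) = 6"
  by (rule trans[OF card_GS[of 5 3 0 5 5 2, unfolded pl]]) (simp add: pcs_5_5_2 del: One_nat_def)

lemma pc_5_2_1_5_5_2 [pcs_5_5_2]: "card (GS 5 2 1 5 5 2) = 4"
  by (rule trans[OF card_GS[of 5 2 1 5 5 2, unfolded pl]]) (simp add: pcs_5_5_2 del: One_nat_def)

lemma pc_4_4_0_5_5_2 [pcs_5_5_2]: "card (GS 4 4 0 5 5 2) = 6"
  by (rule trans[OF card_GS[of 4 4 0 5 5 2, unfolded pl]]) (simp add: pcs_5_5_2 del: One_nat_def)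

lemma pc_3_2_3_5_5_2 [pcs_5_5_2]: "card (GS 3 2 3 5 5 2) = 0"
  by (rule GS_zero) simp

lemma pc_3_4_1_5_5_2 [pcs_5_5_2]: "card (GS 3 4 1 5 5 2) = 0"
  by (rule GS_zero) simp

lemma pc_5_1_2_5_5_2 [pcs_5_5_2]: "card (GS 5 1 2 5 5 2) = 0"
  by (rule GS_zero) simp

lemma pc_4_1_2_5_5_2 [pcs_5_5_2]: "card (GS 4 1 2 5 5 2) = 0"
  by (rule GS_zero) simp

lemma pc_5_1_1_5_5_2 [pcs_5_5_2]: "card (GS 5 1 1 5 5 2) = 4"
  by (rule trans[OF card_GS[of 5 1 1 5 5 2, unfolded pl]]) (simp add: pcs_5_5_2 del: One_nat_def)

lemma pc_3_3_1_5_5_2 [pcs_5_5_2]: "card (GS 3 3 1 5 5 2) = 10"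
  by (rule trans[OF card_GS[of 3 3 1 5 5 2, unfolded pl]]) (simp add: pcs_5_5_2 del: One_nat_def)

lemma pc_3_4_0_5_5_2 [pcs_5_5_2]: "card (GS 3 4 0 5 5 2) = 0"
  by (rule GS_zero) simp

lemma pc_6_1_0_5_5_2 [pcs_5_5_2]: "card (GS 6 1 0 5 5 2) = 0"
  by (rule GS_zero) simp

lemma pc_5_2_0_5_5_2 [pcs_5_5_2]: "card (GS 5 2 0 5 5 2) = 10"
  by (rule trans[OF card_GS[of 5 2 0 5 5 2, unfolded pl]]) (simp add: pcs_5_5_2 del: One_nat_def)

lemma pc_3_2_2_5_5_2 [pcs_5_5_2]: "card (GS 3 2 2 5 5 2) = 5"
  by (rule trans[OF card_GS[of 3 2 2 5 5 2, unfolded pl]]) (simp add: pcs_5_5_2 del: One_nat_def)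

lemma pc_4_3_0_5_5_2 [pcs_5_5_2]: "card (GS 4 3 0 5 5 2) = 20"
  by (rule trans[OF card_GS[of 4 3 0 5 5 2, unfolded pl]]) (simp add: pcs_5_5_2 del: One_nat_def)

lemma pc_4_2_1_5_5_2 [pcs_5_5_2]: "card (GS 4 2 1 5 5 2) = 15"
  by (rule trans[OF card_GS[of 4 2 1 5 5 2, unfolded pl]]) (simp add: pcs_5_5_2 del: One_nat_def)

lemma pc_2_3_2_5_5_2 [pcs_5_5_2]: "card (GS 2 3 2 5 5 2) = 0"
  by (rule GS_zero) simp

lemma pc_2_2_3_5_5_2 [pcs_5_5_2]: "card (GS 2 2 3 5 5 2) = 0"
  by (rule GS_zero) simp

lemma pc_6_0_0_5_5_2 [pcs_5_5_2]: "card (GS 6 0 0 5 5 2) = 0"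
  by (rule GS_zero) simp

lemma pc_3_2_1_5_5_2 [pcs_5_5_2]: "card (GS 3 2 1 5 5 2) = 30"
  by (rule trans[OF card_GS[of 3 2 1 5 5 2, unfolded pl]]) (simp add: pcs_5_5_2 del: One_nat_def)

lemma pc_4_2_0_5_5_2 [pcs_5_5_2]: "card (GS 4 2 0 5 5 2) = 45"
  by (rule trans[OF card_GS[of 4 2 0 5 5 2, unfolded pl]]) (simp add: pcs_5_5_2 del: One_nat_def)

lemma pc_2_2_2_5_5_2 [pcs_5_5_2]: "card (GS 2 2 2 5 5 2) = 5"
  by (rule trans[OF card_GS[of 2 2 2 5 5 2, unfolded pl]]) (simp add: pcs_5_5_2 del: One_nat_def)

lemma pc_3_1_2_5_5_2 [pcs_5_5_2]: "card (GS 3 1 2 5 5 2) = 0"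
  by (rule GS_zero) simp

lemma pc_2_3_1_5_5_2 [pcs_5_5_2]: "card (GS 2 3 1 5 5 2) = 0"
  by (rule GS_zero) simp

lemma pc_5_1_0_5_5_2 [pcs_5_5_2]: "card (GS 5 1 0 5 5 2) = 14"
  by (rule trans[OF card_GS[of 5 1 0 5 5 2, unfolded pl]]) (simp add: pcs_5_5_2 del: One_nat_def)

lemma pc_5_0_1_5_5_2 [pcs_5_5_2]: "card (GS 5 0 1 5 5 2) = 0"
  by (rule GS_zero) simp

lemma pc_4_1_1_5_5_2 [pcs_5_5_2]: "card (GS 4 1 1 5 5 2) = 19"
  by (rule trans[OF card_GS[of 4 1 1 5 5 2, unfolded pl]]) (simp add: pcs_5_5_2 del: One_nat_def)

lemma pc_3_3_0_5_5_2 [pcs_5_5_2]: "card (GS 3 3 0 5 5 2) = 30"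
  by (rule trans[OF card_GS[of 3 3 0 5 5 2, unfolded pl]]) (simp add: pcs_5_5_2 del: One_nat_def)

lemma pc_4_0_1_5_5_2 [pcs_5_5_2]: "card (GS 4 0 1 5 5 2) = 0"
  by (rule GS_zero) simp

lemma pc_3_1_1_5_5_2 [pcs_5_5_2]: "card (GS 3 1 1 5 5 2) = 49"
  by (rule trans[OF card_GS[of 3 1 1 5 5 2, unfolded pl]]) (simp add: pcs_5_5_2 del: One_nat_def)

lemma pc_3_2_0_5_5_2 [pcs_5_5_2]: "card (GS 3 2 0 5 5 2) = 105"
  by (rule trans[OF card_GS[of 3 2 0 5 5 2, unfolded pl]]) (simp add: pcs_5_5_2 del: One_nat_def)

lemma pc_2_3_0_5_5_2 [pcs_5_5_2]: "card (GS 2 3 0 5 5 2) = 0"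
  by (rule GS_zero) simp

lemma pc_2_1_2_5_5_2 [pcs_5_5_2]: "card (GS 2 1 2 5 5 2) = 0"
  by (rule GS_zero) simp

lemma pc_2_2_1_5_5_2 [pcs_5_5_2]: "card (GS 2 2 1 5 5 2) = 35"
  by (rule trans[OF card_GS[of 2 2 1 5 5 2, unfolded pl]]) (simp add: pcs_5_5_2 del: One_nat_def)

lemma pc_5_0_0_5_5_2 [pcs_5_5_2]: "card (GS 5 0 0 5 5 2) = 14"
  by (rule trans[OF card_GS[of 5 0 0 5 5 2, unfolded pl]]) (simp add: pcs_5_5_2 del: One_nat_def)

lemma pc_4_1_0_5_5_2 [pcs_5_5_2]: "card (GS 4 1 0 5 5 2) = 78"
  by (rule trans[OF card_GS[of 4 1 0 5 5 2, unfolded pl]]) (simp add: pcs_5_5_2 del: One_nat_def)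

lemma pc_1_1_2_5_5_2 [pcs_5_5_2]: "card (GS 1 1 2 5 5 2) = 0"
  by (rule GS_zero) simp

lemma pc_2_2_0_5_5_2 [pcs_5_5_2]: "card (GS 2 2 0 5 5 2) = 140"
  by (rule trans[OF card_GS[of 2 2 0 5 5 2, unfolded pl]]) (simp add: pcs_5_5_2 del: One_nat_def)

lemma pc_3_1_0_5_5_2 [pcs_5_5_2]: "card (GS 3 1 0 5 5 2) = 232"
  by (rule trans[OF card_GS[of 3 1 0 5 5 2, unfolded pl]]) (simp add: pcs_5_5_2 del: One_nat_def)

lemma pc_4_0_0_5_5_2 [pcs_5_5_2]: "card (GS 4 0 0 5 5 2) = 92"
  by (rule trans[OF card_GS[of 4 0 0 5 5 2, unfolded pl]]) (simp add: pcs_5_5_2 del: One_nat_def)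

lemma pc_1_2_1_5_5_2 [pcs_5_5_2]: "card (GS 1 2 1 5 5 2) = 0"
  by (rule GS_zero) simp

lemma pc_2_1_1_5_5_2 [pcs_5_5_2]: "card (GS 2 1 1 5 5 2) = 84"
  by (rule trans[OF card_GS[of 2 1 1 5 5 2, unfolded pl]]) (simp add: pcs_5_5_2 del: One_nat_def)

lemma pc_3_0_1_5_5_2 [pcs_5_5_2]: "card (GS 3 0 1 5 5 2) = 0"
  by (rule GS_zero) simp

lemma pc_2_0_1_5_5_2 [pcs_5_5_2]: "card (GS 2 0 1 5 5 2) = 0"
  by (rule GS_zero) simp

lemma pc_3_0_0_5_5_2 [pcs_5_5_2]: "card (GS 3 0 0 5 5 2) = 324"
  by (rule trans[OF card_GS[of 3 0 0 5 5 2, unfolded pl]]) (simp add: pcs_5_5_2 del: One_nat_def)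

lemma pc_1_2_0_5_5_2 [pcs_5_5_2]: "card (GS 1 2 0 5 5 2) = 0"
  by (rule GS_zero) simp

lemma pc_1_1_1_5_5_2 [pcs_5_5_2]: "card (GS 1 1 1 5 5 2) = 84"
  by (rule trans[OF card_GS[of 1 1 1 5 5 2, unfolded pl]]) (simp add: pcs_5_5_2 del: One_nat_def)

lemma pc_2_1_0_5_5_2 [pcs_5_5_2]: "card (GS 2 1 0 5 5 2) = 456"
  by (rule trans[OF card_GS[of 2 1 0 5 5 2, unfolded pl]]) (simp add: pcs_5_5_2 del: One_nat_def)

lemma pc_1_0_1_5_5_2 [pcs_5_5_2]: "card (GS 1 0 1 5 5 2) = 0"
  by (rule GS_zero) simp

lemma pc_1_1_0_5_5_2 [pcs_5_5_2]: "card (GS 1 1 0 5 5 2) = 540"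
  by (rule trans[OF card_GS[of 1 1 0 5 5 2, unfolded pl]]) (simp add: pcs_5_5_2 del: One_nat_def)

lemma pc_2_0_0_5_5_2 [pcs_5_5_2]: "card (GS 2 0 0 5 5 2) = 780"
  by (rule trans[OF card_GS[of 2 0 0 5 5 2, unfolded pl]]) (simp add: pcs_5_5_2 del: One_nat_def)

lemma pc_0_1_0_5_5_2 [pcs_5_5_2]: "card (GS 0 1 0 5 5 2) = 0"
  by (rule GS_zero) simp

lemma pc_0_0_1_5_5_2 [pcs_5_5_2]: "card (GS 0 0 1 5 5 2) = 0"
  by (rule GS_zero) simp

lemma pc_1_0_0_5_5_2 [pcs_5_5_2]: "card (GS 1 0 0 5 5 2) = 1320"
  by (rule trans[OF card_GS[of 1 0 0 5 5 2, unfolded pl]]) (simp add: pcs_5_5_2 del: One_nat_def)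

lemma pc_0_0_0_5_5_2 [pcs_5_5_2]: "card (GS 0 0 0 5 5 2) = 1320"
  by (rule trans[OF card_GS[of 0 0 0 5 5 2, unfolded pl]]) (simp add: pcs_5_5_2 del: One_nat_def)

named_theorems pcs_6_4_2

lemma pc_6_5_2_6_4_2 [pcs_6_4_2]: "card (GS 6 5 2 6 4 2) = 0"
  by (rule GS_zero) simp

lemma pc_6_4_3_6_4_2 [pcs_6_4_2]: "card (GS 6 4 3 6 4 2) = 0"
  by (rule GS_zero) simp

lemma pc_7_4_2_6_4_2 [pcs_6_4_2]: "card (GS 7 4 2 6 4 2) = 0"
  by (rule GS_zero) simp

lemma pc_7_3_2_6_4_2 [pcs_6_4_2]: "card (GS 7 3 2 6 4 2) = 0"
  by (rule GS_zero) simp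

lemma pc_7_4_1_6_4_2 [pcs_6_4_2]: "card (GS 7 4 1 6 4 2) = 0"
  by (rule GS_zero) simp

lemma pc_5_4_3_6_4_2 [pcs_6_4_2]: "card (GS 5 4 3 6 4 2) = 0"
  by (rule GS_zero) simp

lemma pc_6_3_3_6_4_2 [pcs_6_4_2]: "card (GS 6 3 3 6 4 2) = 0"
  by (rule GS_zero) simp

lemma pc_5_5_2_6_4_2 [pcs_6_4_2]: "card (GS 5 5 2 6 4 2) = 0"
  by (rule GS_zero) simp

lemma pc_6_5_1_6_4_2 [pcs_6_4_2]: "card (GS 6 5 1 6 4 2) = 0"
  by (rule GS_zero) simp

lemma pc_6_4_2_6_4_2 [pcs_6_4_2]: "card (GS 6 4 2 6 4 2) = 1"
  by (rule trans[OF card_GS[of 6 4 2 6 4 2, unfolded pl]]) (simp add: pcs_6_4_2 del: One_nat_def)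

lemma pc_5_3_3_6_4_2 [pcs_6_4_2]: "card (GS 5 3 3 6 4 2) = 0"
  by (rule GS_zero) simp

lemma pc_5_4_2_6_4_2 [pcs_6_4_2]: "card (GS 5 4 2 6 4 2) = 1"
  by (rule trans[OF card_GS[of 5 4 2 6 4 2, unfolded pl]]) (simp add: pcs_6_4_2 del: One_nat_def)

lemma pc_4_4_3_6_4_2 [pcs_6_4_2]: "card (GS 4 4 3 6 4 2) = 0"
  by (rule GS_zero) simp

lemma pc_7_2_2_6_4_2 [pcs_6_4_2]: "card (GS 7 2 2 6 4 2) = 0"
  by (rule GS_zero) simp

lemma pc_6_5_0_6_4_2 [pcs_6_4_2]: "card (GS 6 5 0 6 4 2) = 0"
  by (rule GS_zero) simp

lemma pc_6_4_1_6_4_2 [pcs_6_4_2]: "card (GS 6 4 1 6 4 2) = 1"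
  by (rule trans[OF card_GS[of 6 4 1 6 4 2, unfolded pl]]) (simp add: pcs_6_4_2 del: One_nat_def)

lemma pc_7_4_0_6_4_2 [pcs_6_4_2]: "card (GS 7 4 0 6 4 2) = 0"
  by (rule GS_zero) simp

lemma pc_6_3_2_6_4_2 [pcs_6_4_2]: "card (GS 6 3 2 6 4 2) = 1"
  by (rule trans[OF card_GS[of 6 3 2 6 4 2, unfolded pl]]) (simp add: pcs_6_4_2 del: One_nat_def)

lemma pc_6_2_3_6_4_2 [pcs_6_4_2]: "card (GS 6 2 3 6 4 2) = 0"
  by (rule GS_zero) simp

lemma pc_7_3_1_6_4_2 [pcs_6_4_2]: "card (GS 7 3 1 6 4 2) = 0"
  by (rule GS_zero) simp

lemma pc_4_5_2_6_4_2 [pcs_6_4_2]: "card (GS 4 5 2 6 4 2) = 0"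
  by (rule GS_zero) simp

lemma pc_5_5_1_6_4_2 [pcs_6_4_2]: "card (GS 5 5 1 6 4 2) = 0"
  by (rule GS_zero) simp

lemma pc_6_2_2_6_4_2 [pcs_6_4_2]: "card (GS 6 2 2 6 4 2) = 1"
  by (rule trans[OF card_GS[of 6 2 2 6 4 2, unfolded pl]]) (simp add: pcs_6_4_2 del: One_nat_def)

lemma pc_7_3_0_6_4_2 [pcs_6_4_2]: "card (GS 7 3 0 6 4 2) = 0"
  by (rule GS_zero) simp

lemma pc_5_5_0_6_4_2 [pcs_6_4_2]: "card (GS 5 5 0 6 4 2) = 0"
  by (rule GS_zero) simp

lemma pc_5_3_2_6_4_2 [pcs_6_4_2]: "card (GS 5 3 2 6 4 2) = 2"
  by (rule trans[OF card_GS[of 5 3 2 6 4 2, unfolded pl]]) (simp add: pcs_6_4_2 del: One_nat_def)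

lemma pc_5_4_1_6_4_2 [pcs_6_4_2]: "card (GS 5 4 1 6 4 2) = 2"
  by (rule trans[OF card_GS[of 5 4 1 6 4 2, unfolded pl]]) (simp add: pcs_6_4_2 del: One_nat_def)

lemma pc_6_3_1_6_4_2 [pcs_6_4_2]: "card (GS 6 3 1 6 4 2) = 2"
  by (rule trans[OF card_GS[of 6 3 1 6 4 2, unfolded pl]]) (simp add: pcs_6_4_2 del: One_nat_def)

lemma pc_5_2_3_6_4_2 [pcs_6_4_2]: "card (GS 5 2 3 6 4 2) = 0"
  by (rule GS_zero) simp

lemma pc_4_4_2_6_4_2 [pcs_6_4_2]: "card (GS 4 4 2 6 4 2) = 1"
  by (rule trans[OF card_GS[of 4 4 2 6 4 2, unfolded pl]]) (simp add: pcs_6_4_2 del: One_nat_def)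

lemma pc_4_5_1_6_4_2 [pcs_6_4_2]: "card (GS 4 5 1 6 4 2) = 0"
  by (rule GS_zero) simp

lemma pc_4_3_3_6_4_2 [pcs_6_4_2]: "card (GS 4 3 3 6 4 2) = 0"
  by (rule GS_zero) simp

lemma pc_7_2_1_6_4_2 [pcs_6_4_2]: "card (GS 7 2 1 6 4 2) = 0"
  by (rule GS_zero) simp

lemma pc_6_4_0_6_4_2 [pcs_6_4_2]: "card (GS 6 4 0 6 4 2) = 1"
  by (rule trans[OF card_GS[of 6 4 0 6 4 2, unfolded pl]]) (simp add: pcs_6_4_2 del: One_nat_def)

lemma pc_7_1_1_6_4_2 [pcs_6_4_2]: "card (GS 7 1 1 6 4 2) = 0"
  by (rule GS_zero) simp

lemma pc_3_3_3_6_4_2 [pcs_6_4_2]: "card (GS 3 3 3 6 4 2) = 0"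
  by (rule GS_zero) simp

lemma pc_3_4_2_6_4_2 [pcs_6_4_2]: "card (GS 3 4 2 6 4 2) = 0"
  by (rule GS_zero) simp

lemma pc_6_1_2_6_4_2 [pcs_6_4_2]: "card (GS 6 1 2 6 4 2) = 0"
  by (rule GS_zero) simp

lemma pc_5_4_0_6_4_2 [pcs_6_4_2]: "card (GS 5 4 0 6 4 2) = 3"
  by (rule trans[OF card_GS[of 5 4 0 6 4 2, unfolded pl]]) (simp add: pcs_6_4_2 del: One_nat_def)

lemma pc_6_3_0_6_4_2 [pcs_6_4_2]: "card (GS 6 3 0 6 4 2) = 3"
  by (rule trans[OF card_GS[of 6 3 0 6 4 2, unfolded pl]]) (simp add: pcs_6_4_2 del: One_nat_def)

lemma pc_5_2_2_6_4_2 [pcs_6_4_2]: "card (GS 5 2 2 6 4 2) = 3"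
  by (rule trans[OF card_GS[of 5 2 2 6 4 2, unfolded pl]]) (simp add: pcs_6_4_2 del: One_nat_def)

lemma pc_6_2_1_6_4_2 [pcs_6_4_2]: "card (GS 6 2 1 6 4 2) = 3"
  by (rule trans[OF card_GS[of 6 2 1 6 4 2, unfolded pl]]) (simp add: pcs_6_4_2 del: One_nat_def)

lemma pc_4_4_1_6_4_2 [pcs_6_4_2]: "card (GS 4 4 1 6 4 2) = 3"
  by (rule trans[OF card_GS[of 4 4 1 6 4 2, unfolded pl]]) (simp add: pcs_6_4_2 del: One_nat_def)

lemma pc_4_5_0_6_4_2 [pcs_6_4_2]: "card (GS 4 5 0 6 4 2) = 0"
  by (rule GS_zero) simp

lemma pc_4_3_2_6_4_2 [pcs_6_4_2]: "card (GS 4 3 2 6 4 2) = 3"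
  by (rule trans[OF card_GS[of 4 3 2 6 4 2, unfolded pl]]) (simp add: pcs_6_4_2 del: One_nat_def)

lemma pc_7_2_0_6_4_2 [pcs_6_4_2]: "card (GS 7 2 0 6 4 2) = 0"
  by (rule GS_zero) simp

lemma pc_4_2_3_6_4_2 [pcs_6_4_2]: "card (GS 4 2 3 6 4 2) = 0"
  by (rule GS_zero) simp

lemma pc_5_3_1_6_4_2 [pcs_6_4_2]: "card (GS 5 3 1 6 4 2) = 6"
  by (rule trans[OF card_GS[of 5 3 1 6 4 2, unfolded pl]]) (simp add: pcs_6_4_2 del: One_nat_def)

lemma pc_3_3_2_6_4_2 [pcs_6_4_2]: "card (GS 3 3 2 6 4 2) = 3"
  by (rule trans[OF card_GS[of 3 3 2 6 4 2, unfolded pl]]) (simp add: pcs_6_4_2 del: One_nat_def)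

lemma pc_6_2_0_6_4_2 [pcs_6_4_2]: "card (GS 6 2 0 6 4 2) = 6"
  by (rule trans[OF card_GS[of 6 2 0 6 4 2, unfolded pl]]) (simp add: pcs_6_4_2 del: One_nat_def)

lemma pc_6_1_1_6_4_2 [pcs_6_4_2]: "card (GS 6 1 1 6 4 2) = 3"
  by (rule trans[OF card_GS[of 6 1 1 6 4 2, unfolded pl]]) (simp add: pcs_6_4_2 del: One_nat_def)

lemma pc_4_3_1_6_4_2 [pcs_6_4_2]: "card (GS 4 3 1 6 4 2) = 12"
  by (rule trans[OF card_GS[of 4 3 1 6 4 2, unfolded pl]]) (simp add: pcs_6_4_2 del: One_nat_def)

lemma pc_4_2_2_6_4_2 [pcs_6_4_2]: "card (GS 4 2 2 6 4 2) = 6"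
  by (rule trans[OF card_GS[of 4 2 2 6 4 2, unfolded pl]]) (simp add: pcs_6_4_2 del: One_nat_def)

lemma pc_5_3_0_6_4_2 [pcs_6_4_2]: "card (GS 5 3 0 6 4 2) = 12"
  by (rule trans[OF card_GS[of 5 3 0 6 4 2, unfolded pl]]) (simp add: pcs_6_4_2 del: One_nat_def)

lemma pc_5_2_1_6_4_2 [pcs_6_4_2]: "card (GS 5 2 1 6 4 2) = 12"
  by (rule trans[OF card_GS[of 5 2 1 6 4 2, unfolded pl]]) (simp add: pcs_6_4_2 del: One_nat_def)

lemma pc_4_4_0_6_4_2 [pcs_6_4_2]: "card (GS 4 4 0 6 4 2) = 6"
  by (rule trans[OF card_GS[of 4 4 0 6 4 2, unfolded pl]]) (simp add: pcs_6_4_2 del: One_nat_def)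

lemma pc_3_2_3_6_4_2 [pcs_6_4_2]: "card (GS 3 2 3 6 4 2) = 0"
  by (rule GS_zero) simp

lemma pc_7_1_0_6_4_2 [pcs_6_4_2]: "card (GS 7 1 0 6 4 2) = 0"
  by (rule GS_zero) simp

lemma pc_3_4_1_6_4_2 [pcs_6_4_2]: "card (GS 3 4 1 6 4 2) = 0"
  by (rule GS_zero) simp

lemma pc_5_1_2_6_4_2 [pcs_6_4_2]: "card (GS 5 1 2 6 4 2) = 0"
  by (rule GS_zero) simp

lemma pc_4_1_2_6_4_2 [pcs_6_4_2]: "card (GS 4 1 2 6 4 2) = 0"
  by (rule GS_zero) simp

lemma pc_5_1_1_6_4_2 [pcs_6_4_2]: "card (GS 5 1 1 6 4 2) = 15"
  by (rule trans[OF card_GS[of 5 1 1 6 4 2, unfolded pl]]) (simp add: pcs_6_4_2 del: One_nat_def)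

lemma pc_3_3_1_6_4_2 [pcs_6_4_2]: "card (GS 3 3 1 6 4 2) = 15"
  by (rule trans[OF card_GS[of 3 3 1 6 4 2, unfolded pl]]) (simp add: pcs_6_4_2 del: One_nat_def)

lemma pc_3_4_0_6_4_2 [pcs_6_4_2]: "card (GS 3 4 0 6 4 2) = 0"
  by (rule GS_zero) simp

lemma pc_6_0_1_6_4_2 [pcs_6_4_2]: "card (GS 6 0 1 6 4 2) = 0"
  by (rule GS_zero) simp

lemma pc_6_1_0_6_4_2 [pcs_6_4_2]: "card (GS 6 1 0 6 4 2) = 9"
  by (rule trans[OF card_GS[of 6 1 0 6 4 2, unfolded pl]]) (simp add: pcs_6_4_2 del: One_nat_def)

lemma pc_5_2_0_6_4_2 [pcs_6_4_2]: "card (GS 5 2 0 6 4 2) = 30"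
  by (rule trans[OF card_GS[of 5 2 0 6 4 2, unfolded pl]]) (simp add: pcs_6_4_2 del: One_nat_def)

lemma pc_3_2_2_6_4_2 [pcs_6_4_2]: "card (GS 3 2 2 6 4 2) = 9"
  by (rule trans[OF card_GS[of 3 2 2 6 4 2, unfolded pl]]) (simp add: pcs_6_4_2 del: One_nat_def)

lemma pc_4_3_0_6_4_2 [pcs_6_4_2]: "card (GS 4 3 0 6 4 2) = 30"
  by (rule trans[OF card_GS[of 4 3 0 6 4 2, unfolded pl]]) (simp add: pcs_6_4_2 del: One_nat_def)

lemma pc_4_2_1_6_4_2 [pcs_6_4_2]: "card (GS 4 2 1 6 4 2) = 30"
  by (rule trans[OF card_GS[of 4 2 1 6 4 2, unfolded pl]]) (simp add: pcs_6_4_2 del: One_nat_def)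

lemma pc_7_0_0_6_4_2 [pcs_6_4_2]: "card (GS 7 0 0 6 4 2) = 0"
  by (rule GS_zero) simp

lemma pc_2_3_2_6_4_2 [pcs_6_4_2]: "card (GS 2 3 2 6 4 2) = 0"
  by (rule GS_zero) simp

lemma pc_2_2_3_6_4_2 [pcs_6_4_2]: "card (GS 2 2 3 6 4 2) = 0"
  by (rule GS_zero) simp

lemma pc_6_0_0_6_4_2 [pcs_6_4_2]: "card (GS 6 0 0 6 4 2) = 9"
  by (rule trans[OF card_GS[of 6 0 0 6 4 2, unfolded pl]]) (simp add: pcs_6_4_2 del: One_nat_def)

lemma pc_3_2_1_6_4_2 [pcs_6_4_2]: "card (GS 3 2 1 6 4 2) = 54"
  by (rule trans[OF card_GS[of 3 2 1 6 4 2, unfolded pl]]) (simp add: pcs_6_4_2 del: One_nat_def)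

lemma pc_4_2_0_6_4_2 [pcs_6_4_2]: "card (GS 4 2 0 6 4 2) = 90"
  by (rule trans[OF card_GS[of 4 2 0 6 4 2, unfolded pl]]) (simp add: pcs_6_4_2 del: One_nat_def)

lemma pc_2_2_2_6_4_2 [pcs_6_4_2]: "card (GS 2 2 2 6 4 2) = 9"
  by (rule trans[OF card_GS[of 2 2 2 6 4 2, unfolded pl]]) (simp add: pcs_6_4_2 del: One_nat_def)

lemma pc_3_1_2_6_4_2 [pcs_6_4_2]: "card (GS 3 1 2 6 4 2) = 0"
  by (rule GS_zero) simp

lemma pc_2_3_1_6_4_2 [pcs_6_4_2]: "card (GS 2 3 1 6 4 2) = 0"
  by (rule GS_zero) simp

lemma pc_5_1_0_6_4_2 [pcs_6_4_2]: "card (GS 5 1 0 6 4 2) = 54"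
  by (rule trans[OF card_GS[of 5 1 0 6 4 2, unfolded pl]]) (simp add: pcs_6_4_2 del: One_nat_def)

lemma pc_5_0_1_6_4_2 [pcs_6_4_2]: "card (GS 5 0 1 6 4 2) = 0"
  by (rule GS_zero) simp

lemma pc_4_1_1_6_4_2 [pcs_6_4_2]: "card (GS 4 1 1 6 4 2) = 45"
  by (rule trans[OF card_GS[of 4 1 1 6 4 2, unfolded pl]]) (simp add: pcs_6_4_2 del: One_nat_def)

lemma pc_3_3_0_6_4_2 [pcs_6_4_2]: "card (GS 3 3 0 6 4 2) = 45"
  by (rule trans[OF card_GS[of 3 3 0 6 4 2, unfolded pl]]) (simp add: pcs_6_4_2 del: One_nat_def)

lemma pc_4_0_1_6_4_2 [pcs_6_4_2]: "card (GS 4 0 1 6 4 2) = 0"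
  by (rule GS_zero) simp

lemma pc_3_1_1_6_4_2 [pcs_6_4_2]: "card (GS 3 1 1 6 4 2) = 99"
  by (rule trans[OF card_GS[of 3 1 1 6 4 2, unfolded pl]]) (simp add: pcs_6_4_2 del: One_nat_def)

lemma pc_3_2_0_6_4_2 [pcs_6_4_2]: "card (GS 3 2 0 6 4 2) = 189"
  by (rule trans[OF card_GS[of 3 2 0 6 4 2, unfolded pl]]) (simp add: pcs_6_4_2 del: One_nat_def)

lemma pc_2_3_0_6_4_2 [pcs_6_4_2]: "card (GS 2 3 0 6 4 2) = 0"
  by (rule GS_zero) simp

lemma pc_2_1_2_6_4_2 [pcs_6_4_2]: "card (GS 2 1 2 6 4 2) = 0"
  by (rule GS_zero) simp

lemma pc_2_2_1_6_4_2 [pcs_6_4_2]: "card (GS 2 2 1 6 4 2) = 63"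
  by (rule trans[OF card_GS[of 2 2 1 6 4 2, unfolded pl]]) (simp add: pcs_6_4_2 del: One_nat_def)

lemma pc_5_0_0_6_4_2 [pcs_6_4_2]: "card (GS 5 0 0 6 4 2) = 63"
  by (rule trans[OF card_GS[of 5 0 0 6 4 2, unfolded pl]]) (simp add: pcs_6_4_2 del: One_nat_def)

lemma pc_4_1_0_6_4_2 [pcs_6_4_2]: "card (GS 4 1 0 6 4 2) = 189"
  by (rule trans[OF card_GS[of 4 1 0 6 4 2, unfolded pl]]) (simp add: pcs_6_4_2 del: One_nat_def)

lemma pc_1_1_2_6_4_2 [pcs_6_4_2]: "card (GS 1 1 2 6 4 2) = 0"
  by (rule GS_zero) simp

lemma pc_2_2_0_6_4_2 [pcs_6_4_2]: "card (GS 2 2 0 6 4 2) = 252"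
  by (rule trans[OF card_GS[of 2 2 0 6 4 2, unfolded pl]]) (simp add: pcs_6_4_2 del: One_nat_def)

lemma pc_3_1_0_6_4_2 [pcs_6_4_2]: "card (GS 3 1 0 6 4 2) = 477"
  by (rule trans[OF card_GS[of 3 1 0 6 4 2, unfolded pl]]) (simp add: pcs_6_4_2 del: One_nat_def)

lemma pc_4_0_0_6_4_2 [pcs_6_4_2]: "card (GS 4 0 0 6 4 2) = 252"
  by (rule trans[OF card_GS[of 4 0 0 6 4 2, unfolded pl]]) (simp add: pcs_6_4_2 del: One_nat_def)

lemma pc_1_2_1_6_4_2 [pcs_6_4_2]: "card (GS 1 2 1 6 4 2) = 0"
  by (rule GS_zero) simp

lemma pc_2_1_1_6_4_2 [pcs_6_4_2]: "card (GS 2 1 1 6 4 2) = 162"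
  by (rule trans[OF card_GS[of 2 1 1 6 4 2, unfolded pl]]) (simp add: pcs_6_4_2 del: One_nat_def)

lemma pc_3_0_1_6_4_2 [pcs_6_4_2]: "card (GS 3 0 1 6 4 2) = 0"
  by (rule GS_zero) simp

lemma pc_2_0_1_6_4_2 [pcs_6_4_2]: "card (GS 2 0 1 6 4 2) = 0"
  by (rule GS_zero) simp

lemma pc_3_0_0_6_4_2 [pcs_6_4_2]: "card (GS 3 0 0 6 4 2) = 729"
  by (rule trans[OF card_GS[of 3 0 0 6 4 2, unfolded pl]]) (simp add: pcs_6_4_2 del: One_nat_def)

lemma pc_1_2_0_6_4_2 [pcs_6_4_2]: "card (GS 1 2 0 6 4 2) = 0"
  by (rule GS_zero) simp

lemma pc_1_1_1_6_4_2 [pcs_6_4_2]: "card (GS 1 1 1 6 4 2) = 162"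
  by (rule trans[OF card_GS[of 1 1 1 6 4 2, unfolded pl]]) (simp add: pcs_6_4_2 del: One_nat_def)

lemma pc_2_1_0_6_4_2 [pcs_6_4_2]: "card (GS 2 1 0 6 4 2) = 891"
  by (rule trans[OF card_GS[of 2 1 0 6 4 2, unfolded pl]]) (simp add: pcs_6_4_2 del: One_nat_def)

lemma pc_1_0_1_6_4_2 [pcs_6_4_2]: "card (GS 1 0 1 6 4 2) = 0"
  by (rule GS_zero) simp

lemma pc_1_1_0_6_4_2 [pcs_6_4_2]: "card (GS 1 1 0 6 4 2) = 1053"
  by (rule trans[OF card_GS[of 1 1 0 6 4 2, unfolded pl]]) (simp add: pcs_6_4_2 del: One_nat_def)

lemma pc_2_0_0_6_4_2 [pcs_6_4_2]: "card (GS 2 0 0 6 4 2) = 1620"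
  by (rule trans[OF card_GS[of 2 0 0 6 4 2, unfolded pl]]) (simp add: pcs_6_4_2 del: One_nat_def)

lemma pc_0_1_0_6_4_2 [pcs_6_4_2]: "card (GS 0 1 0 6 4 2) = 0"
  by (rule GS_zero) simp

lemma pc_0_0_1_6_4_2 [pcs_6_4_2]: "card (GS 0 0 1 6 4 2) = 0"
  by (rule GS_zero) simp

lemma pc_1_0_0_6_4_2 [pcs_6_4_2]: "card (GS 1 0 0 6 4 2) = 2673"
  by (rule trans[OF card_GS[of 1 0 0 6 4 2, unfolded pl]]) (simp add: pcs_6_4_2 del: One_nat_def)

lemma pc_0_0_0_6_4_2 [pcs_6_4_2]: "card (GS 0 0 0 6 4 2) = 2673"
  by (rule trans[OF card_GS[of 0 0 0 6 4 2, unfolded pl]]) (simp add: pcs_6_4_2 del: One_nat_def)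

named_theorems pcs_7_3_2

lemma pc_7_4_2_7_3_2 [pcs_7_3_2]: "card (GS 7 4 2 7 3 2) = 0"
  by (rule GS_zero) simp

lemma pc_8_3_2_7_3_2 [pcs_7_3_2]: "card (GS 8 3 2 7 3 2) = 0"
  by (rule GS_zero) simp

lemma pc_7_3_3_7_3_2 [pcs_7_3_2]: "card (GS 7 3 3 7 3 2) = 0"
  by (rule GS_zero) simp

lemma pc_8_3_1_7_3_2 [pcs_7_3_2]: "card (GS 8 3 1 7 3 2) = 0"
  by (rule GS_zero) simp

lemma pc_8_2_2_7_3_2 [pcs_7_3_2]: "card (GS 8 2 2 7 3 2) = 0"
  by (rule GS_zero) simp

lemma pc_7_3_2_7_3_2 [pcs_7_3_2]: "card (GS 7 3 2 7 3 2) = 1"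
  by (rule trans[OF card_GS[of 7 3 2 7 3 2, unfolded pl]]) (simp add: pcs_7_3_2 del: One_nat_def)

lemma pc_7_4_1_7_3_2 [pcs_7_3_2]: "card (GS 7 4 1 7 3 2) = 0"
  by (rule GS_zero) simp

lemma pc_6_3_3_7_3_2 [pcs_7_3_2]: "card (GS 6 3 3 7 3 2) = 0"
  by (rule GS_zero) simp

lemma pc_7_2_3_7_3_2 [pcs_7_3_2]: "card (GS 7 2 3 7 3 2) = 0"
  by (rule GS_zero) simp

lemma pc_6_4_2_7_3_2 [pcs_7_3_2]: "card (GS 6 4 2 7 3 2) = 0"
  by (rule GS_zero) simp

lemma pc_5_3_3_7_3_2 [pcs_7_3_2]: "card (GS 5 3 3 7 3 2) = 0"
  by (rule GS_zero) simp

lemma pc_5_4_2_7_3_2 [pcs_7_3_2]: "card (GS 5 4 2 7 3 2) = 0"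
  by (rule GS_zero) simp

lemma pc_7_2_2_7_3_2 [pcs_7_3_2]: "card (GS 7 2 2 7 3 2) = 1"
  by (rule trans[OF card_GS[of 7 2 2 7 3 2, unfolded pl]]) (simp add: pcs_7_3_2 del: One_nat_def)

lemma pc_8_2_1_7_3_2 [pcs_7_3_2]: "card (GS 8 2 1 7 3 2) = 0"
  by (rule GS_zero) simp

lemma pc_6_4_1_7_3_2 [pcs_7_3_2]: "card (GS 6 4 1 7 3 2) = 0"
  by (rule GS_zero) simp

lemma pc_7_4_0_7_3_2 [pcs_7_3_2]: "card (GS 7 4 0 7 3 2) = 0"
  by (rule GS_zero) simp

lemma pc_8_3_0_7_3_2 [pcs_7_3_2]: "card (GS 8 3 0 7 3 2) = 0"
  by (rule GS_zero) simp

lemma pc_6_3_2_7_3_2 [pcs_7_3_2]: "card (GS 6 3 2 7 3 2) = 1"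
  by (rule trans[OF card_GS[of 6 3 2 7 3 2, unfolded pl]]) (simp add: pcs_7_3_2 del: One_nat_def)

lemma pc_6_2_3_7_3_2 [pcs_7_3_2]: "card (GS 6 2 3 7 3 2) = 0"
  by (rule GS_zero) simp

lemma pc_7_3_1_7_3_2 [pcs_7_3_2]: "card (GS 7 3 1 7 3 2) = 1"
  by (rule trans[OF card_GS[of 7 3 1 7 3 2, unfolded pl]]) (simp add: pcs_7_3_2 del: One_nat_def)

lemma pc_6_2_2_7_3_2 [pcs_7_3_2]: "card (GS 6 2 2 7 3 2) = 2"
  by (rule trans[OF card_GS[of 6 2 2 7 3 2, unfolded pl]]) (simp add: pcs_7_3_2 del: One_nat_def)

lemma pc_7_3_0_7_3_2 [pcs_7_3_2]: "card (GS 7 3 0 7 3 2) = 1"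
  by (rule trans[OF card_GS[of 7 3 0 7 3 2, unfolded pl]]) (simp add: pcs_7_3_2 del: One_nat_def)

lemma pc_5_3_2_7_3_2 [pcs_7_3_2]: "card (GS 5 3 2 7 3 2) = 1"
  by (rule trans[OF card_GS[of 5 3 2 7 3 2, unfolded pl]]) (simp add: pcs_7_3_2 del: One_nat_def)

lemma pc_5_4_1_7_3_2 [pcs_7_3_2]: "card (GS 5 4 1 7 3 2) = 0"
  by (rule GS_zero) simp

lemma pc_6_3_1_7_3_2 [pcs_7_3_2]: "card (GS 6 3 1 7 3 2) = 2"
  by (rule trans[OF card_GS[of 6 3 1 7 3 2, unfolded pl]]) (simp add: pcs_7_3_2 del: One_nat_def)

lemma pc_5_2_3_7_3_2 [pcs_7_3_2]: "card (GS 5 2 3 7 3 2) = 0"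
  by (rule GS_zero) simp

lemma pc_4_4_2_7_3_2 [pcs_7_3_2]: "card (GS 4 4 2 7 3 2) = 0"
  by (rule GS_zero) simp

lemma pc_7_1_2_7_3_2 [pcs_7_3_2]: "card (GS 7 1 2 7 3 2) = 0"
  by (rule GS_zero) simp

lemma pc_4_3_3_7_3_2 [pcs_7_3_2]: "card (GS 4 3 3 7 3 2) = 0"
  by (rule GS_zero) simp

lemma pc_7_2_1_7_3_2 [pcs_7_3_2]: "card (GS 7 2 1 7 3 2) = 2"
  by (rule trans[OF card_GS[of 7 2 1 7 3 2, unfolded pl]]) (simp add: pcs_7_3_2 del: One_nat_def)

lemma pc_6_4_0_7_3_2 [pcs_7_3_2]: "card (GS 6 4 0 7 3 2) = 0"
  by (rule GS_zero) simp

lemma pc_8_1_1_7_3_2 [pcs_7_3_2]: "card (GS 8 1 1 7 3 2) = 0"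
  by (rule GS_zero) simp

lemma pc_8_2_0_7_3_2 [pcs_7_3_2]: "card (GS 8 2 0 7 3 2) = 0"
  by (rule GS_zero) simp

lemma pc_7_1_1_7_3_2 [pcs_7_3_2]: "card (GS 7 1 1 7 3 2) = 2"
  by (rule trans[OF card_GS[of 7 1 1 7 3 2, unfolded pl]]) (simp add: pcs_7_3_2 del: One_nat_def)

lemma pc_3_3_3_7_3_2 [pcs_7_3_2]: "card (GS 3 3 3 7 3 2) = 0"
  by (rule GS_zero) simp

lemma pc_3_4_2_7_3_2 [pcs_7_3_2]: "card (GS 3 4 2 7 3 2) = 0"
  by (rule GS_zero) simp

lemma pc_6_1_2_7_3_2 [pcs_7_3_2]: "card (GS 6 1 2 7 3 2) = 0"
  by (rule GS_zero) simp

lemma pc_8_1_0_7_3_2 [pcs_7_3_2]: "card (GS 8 1 0 7 3 2) = 0"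
  by (rule GS_zero) simp

lemma pc_5_4_0_7_3_2 [pcs_7_3_2]: "card (GS 5 4 0 7 3 2) = 0"
  by (rule GS_zero) simp

lemma pc_6_3_0_7_3_2 [pcs_7_3_2]: "card (GS 6 3 0 7 3 2) = 3"
  by (rule trans[OF card_GS[of 6 3 0 7 3 2, unfolded pl]]) (simp add: pcs_7_3_2 del: One_nat_def)

lemma pc_5_2_2_7_3_2 [pcs_7_3_2]: "card (GS 5 2 2 7 3 2) = 3"
  by (rule trans[OF card_GS[of 5 2 2 7 3 2, unfolded pl]]) (simp add: pcs_7_3_2 del: One_nat_def)

lemma pc_6_2_1_7_3_2 [pcs_7_3_2]: "card (GS 6 2 1 7 3 2) = 6"
  by (rule trans[OF card_GS[of 6 2 1 7 3 2, unfolded pl]]) (simp add: pcs_7_3_2 del: One_nat_def)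

lemma pc_4_4_1_7_3_2 [pcs_7_3_2]: "card (GS 4 4 1 7 3 2) = 0"
  by (rule GS_zero) simp

lemma pc_4_3_2_7_3_2 [pcs_7_3_2]: "card (GS 4 3 2 7 3 2) = 1"
  by (rule trans[OF card_GS[of 4 3 2 7 3 2, unfolded pl]]) (simp add: pcs_7_3_2 del: One_nat_def)

lemma pc_7_2_0_7_3_2 [pcs_7_3_2]: "card (GS 7 2 0 7 3 2) = 3"
  by (rule trans[OF card_GS[of 7 2 0 7 3 2, unfolded pl]]) (simp add: pcs_7_3_2 del: One_nat_def)

lemma pc_4_2_3_7_3_2 [pcs_7_3_2]: "card (GS 4 2 3 7 3 2) = 0"
  by (rule GS_zero) simp

lemma pc_5_3_1_7_3_2 [pcs_7_3_2]: "card (GS 5 3 1 7 3 2) = 3"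
  by (rule trans[OF card_GS[of 5 3 1 7 3 2, unfolded pl]]) (simp add: pcs_7_3_2 del: One_nat_def)

lemma pc_3_3_2_7_3_2 [pcs_7_3_2]: "card (GS 3 3 2 7 3 2) = 1"
  by (rule trans[OF card_GS[of 3 3 2 7 3 2, unfolded pl]]) (simp add: pcs_7_3_2 del: One_nat_def)

lemma pc_6_2_0_7_3_2 [pcs_7_3_2]: "card (GS 6 2 0 7 3 2) = 12"
  by (rule trans[OF card_GS[of 6 2 0 7 3 2, unfolded pl]]) (simp add: pcs_7_3_2 del: One_nat_def)

lemma pc_6_1_1_7_3_2 [pcs_7_3_2]: "card (GS 6 1 1 7 3 2) = 8"
  by (rule trans[OF card_GS[of 6 1 1 7 3 2, unfolded pl]]) (simp add: pcs_7_3_2 del: One_nat_def)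

lemma pc_4_3_1_7_3_2 [pcs_7_3_2]: "card (GS 4 3 1 7 3 2) = 4"
  by (rule trans[OF card_GS[of 4 3 1 7 3 2, unfolded pl]]) (simp add: pcs_7_3_2 del: One_nat_def)

lemma pc_4_2_2_7_3_2 [pcs_7_3_2]: "card (GS 4 2 2 7 3 2) = 4"
  by (rule trans[OF card_GS[of 4 2 2 7 3 2, unfolded pl]]) (simp add: pcs_7_3_2 del: One_nat_def)

lemma pc_5_3_0_7_3_2 [pcs_7_3_2]: "card (GS 5 3 0 7 3 2) = 6"
  by (rule trans[OF card_GS[of 5 3 0 7 3 2, unfolded pl]]) (simp add: pcs_7_3_2 del: One_nat_def)

lemma pc_5_2_1_7_3_2 [pcs_7_3_2]: "card (GS 5 2 1 7 3 2) = 12"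
  by (rule trans[OF card_GS[of 5 2 1 7 3 2, unfolded pl]]) (simp add: pcs_7_3_2 del: One_nat_def)

lemma pc_4_4_0_7_3_2 [pcs_7_3_2]: "card (GS 4 4 0 7 3 2) = 0"
  by (rule GS_zero) simp

lemma pc_3_2_3_7_3_2 [pcs_7_3_2]: "card (GS 3 2 3 7 3 2) = 0"
  by (rule GS_zero) simp

lemma pc_7_1_0_7_3_2 [pcs_7_3_2]: "card (GS 7 1 0 7 3 2) = 5"
  by (rule trans[OF card_GS[of 7 1 0 7 3 2, unfolded pl]]) (simp add: pcs_7_3_2 del: One_nat_def)

lemma pc_7_0_1_7_3_2 [pcs_7_3_2]: "card (GS 7 0 1 7 3 2) = 0"
  by (rule GS_zero) simp

lemma pc_3_4_1_7_3_2 [pcs_7_3_2]: "card (GS 3 4 1 7 3 2) = 0"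
  by (rule GS_zero) simp

lemma pc_5_1_2_7_3_2 [pcs_7_3_2]: "card (GS 5 1 2 7 3 2) = 0"
  by (rule GS_zero) simp

lemma pc_8_0_0_7_3_2 [pcs_7_3_2]: "card (GS 8 0 0 7 3 2) = 0"
  by (rule GS_zero) simp

lemma pc_4_1_2_7_3_2 [pcs_7_3_2]: "card (GS 4 1 2 7 3 2) = 0"
  by (rule GS_zero) simp

lemma pc_5_1_1_7_3_2 [pcs_7_3_2]: "card (GS 5 1 1 7 3 2) = 20"
  by (rule trans[OF card_GS[of 5 1 1 7 3 2, unfolded pl]]) (simp add: pcs_7_3_2 del: One_nat_def)

lemma pc_3_3_1_7_3_2 [pcs_7_3_2]: "card (GS 3 3 1 7 3 2) = 5"
  by (rule trans[OF card_GS[of 3 3 1 7 3 2, unfolded pl]]) (simp add: pcs_7_3_2 del: One_nat_def)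

lemma pc_3_4_0_7_3_2 [pcs_7_3_2]: "card (GS 3 4 0 7 3 2) = 0"
  by (rule GS_zero) simp

lemma pc_6_0_1_7_3_2 [pcs_7_3_2]: "card (GS 6 0 1 7 3 2) = 0"
  by (rule GS_zero) simp

lemma pc_6_1_0_7_3_2 [pcs_7_3_2]: "card (GS 6 1 0 7 3 2) = 25"
  by (rule trans[OF card_GS[of 6 1 0 7 3 2, unfolded pl]]) (simp add: pcs_7_3_2 del: One_nat_def)

lemma pc_5_2_0_7_3_2 [pcs_7_3_2]: "card (GS 5 2 0 7 3 2) = 30"
  by (rule trans[OF card_GS[of 5 2 0 7 3 2, unfolded pl]]) (simp add: pcs_7_3_2 del: One_nat_def)

lemma pc_3_2_2_7_3_2 [pcs_7_3_2]: "card (GS 3 2 2 7 3 2) = 5"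
  by (rule trans[OF card_GS[of 3 2 2 7 3 2, unfolded pl]]) (simp add: pcs_7_3_2 del: One_nat_def)

lemma pc_4_3_0_7_3_2 [pcs_7_3_2]: "card (GS 4 3 0 7 3 2) = 10"
  by (rule trans[OF card_GS[of 4 3 0 7 3 2, unfolded pl]]) (simp add: pcs_7_3_2 del: One_nat_def)

lemma pc_4_2_1_7_3_2 [pcs_7_3_2]: "card (GS 4 2 1 7 3 2) = 20"
  by (rule trans[OF card_GS[of 4 2 1 7 3 2, unfolded pl]]) (simp add: pcs_7_3_2 del: One_nat_def)

lemma pc_7_0_0_7_3_2 [pcs_7_3_2]: "card (GS 7 0 0 7 3 2) = 5"
  by (rule trans[OF card_GS[of 7 0 0 7 3 2, unfolded pl]]) (simp add: pcs_7_3_2 del: One_nat_def)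

lemma pc_2_3_2_7_3_2 [pcs_7_3_2]: "card (GS 2 3 2 7 3 2) = 0"
  by (rule GS_zero) simp

lemma pc_2_2_3_7_3_2 [pcs_7_3_2]: "card (GS 2 2 3 7 3 2) = 0"
  by (rule GS_zero) simp

lemma pc_6_0_0_7_3_2 [pcs_7_3_2]: "card (GS 6 0 0 7 3 2) = 30"
  by (rule trans[OF card_GS[of 6 0 0 7 3 2, unfolded pl]]) (simp add: pcs_7_3_2 del: One_nat_def)

lemma pc_3_2_1_7_3_2 [pcs_7_3_2]: "card (GS 3 2 1 7 3 2) = 30"
  by (rule trans[OF card_GS[of 3 2 1 7 3 2, unfolded pl]]) (simp add: pcs_7_3_2 del: One_nat_def)

lemma pc_4_2_0_7_3_2 [pcs_7_3_2]: "card (GS 4 2 0 7 3 2) = 60"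
  by (rule trans[OF card_GS[of 4 2 0 7 3 2, unfolded pl]]) (simp add: pcs_7_3_2 del: One_nat_def)

lemma pc_2_2_2_7_3_2 [pcs_7_3_2]: "card (GS 2 2 2 7 3 2) = 5"
  by (rule trans[OF card_GS[of 2 2 2 7 3 2, unfolded pl]]) (simp add: pcs_7_3_2 del: One_nat_def)

lemma pc_3_1_2_7_3_2 [pcs_7_3_2]: "card (GS 3 1 2 7 3 2) = 0"
  by (rule GS_zero) simp

lemma pc_2_3_1_7_3_2 [pcs_7_3_2]: "card (GS 2 3 1 7 3 2) = 0"
  by (rule GS_zero) simp

lemma pc_5_1_0_7_3_2 [pcs_7_3_2]: "card (GS 5 1 0 7 3 2) = 75"
  by (rule trans[OF card_GS[of 5 1 0 7 3 2, unfolded pl]]) (simp add: pcs_7_3_2 del: One_nat_def)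

lemma pc_5_0_1_7_3_2 [pcs_7_3_2]: "card (GS 5 0 1 7 3 2) = 0"
  by (rule GS_zero) simp

lemma pc_4_1_1_7_3_2 [pcs_7_3_2]: "card (GS 4 1 1 7 3 2) = 40"
  by (rule trans[OF card_GS[of 4 1 1 7 3 2, unfolded pl]]) (simp add: pcs_7_3_2 del: One_nat_def)

lemma pc_3_3_0_7_3_2 [pcs_7_3_2]: "card (GS 3 3 0 7 3 2) = 15"
  by (rule trans[OF card_GS[of 3 3 0 7 3 2, unfolded pl]]) (simp add: pcs_7_3_2 del: One_nat_def)

lemma pc_4_0_1_7_3_2 [pcs_7_3_2]: "card (GS 4 0 1 7 3 2) = 0"
  by (rule GS_zero) simp

lemma pc_3_1_1_7_3_2 [pcs_7_3_2]: "card (GS 3 1 1 7 3 2) = 70"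
  by (rule trans[OF card_GS[of 3 1 1 7 3 2, unfolded pl]]) (simp add: pcs_7_3_2 del: One_nat_def)

lemma pc_3_2_0_7_3_2 [pcs_7_3_2]: "card (GS 3 2 0 7 3 2) = 105"
  by (rule trans[OF card_GS[of 3 2 0 7 3 2, unfolded pl]]) (simp add: pcs_7_3_2 del: One_nat_def)

lemma pc_2_3_0_7_3_2 [pcs_7_3_2]: "card (GS 2 3 0 7 3 2) = 0"
  by (rule GS_zero) simp

lemma pc_2_1_2_7_3_2 [pcs_7_3_2]: "card (GS 2 1 2 7 3 2) = 0"
  by (rule GS_zero) simp

lemma pc_2_2_1_7_3_2 [pcs_7_3_2]: "card (GS 2 2 1 7 3 2) = 35"
  by (rule trans[OF card_GS[of 2 2 1 7 3 2, unfolded pl]]) (simp add: pcs_7_3_2 del: One_nat_def)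

lemma pc_5_0_0_7_3_2 [pcs_7_3_2]: "card (GS 5 0 0 7 3 2) = 105"
  by (rule trans[OF card_GS[of 5 0 0 7 3 2, unfolded pl]]) (simp add: pcs_7_3_2 del: One_nat_def)

lemma pc_4_1_0_7_3_2 [pcs_7_3_2]: "card (GS 4 1 0 7 3 2) = 175"
  by (rule trans[OF card_GS[of 4 1 0 7 3 2, unfolded pl]]) (simp add: pcs_7_3_2 del: One_nat_def)

lemma pc_1_1_2_7_3_2 [pcs_7_3_2]: "card (GS 1 1 2 7 3 2) = 0"
  by (rule GS_zero) simp

lemma pc_2_2_0_7_3_2 [pcs_7_3_2]: "card (GS 2 2 0 7 3 2) = 140"
  by (rule trans[OF card_GS[of 2 2 0 7 3 2, unfolded pl]]) (simp add: pcs_7_3_2 del: One_nat_def)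

lemma pc_3_1_0_7_3_2 [pcs_7_3_2]: "card (GS 3 1 0 7 3 2) = 350"
  by (rule trans[OF card_GS[of 3 1 0 7 3 2, unfolded pl]]) (simp add: pcs_7_3_2 del: One_nat_def)

lemma pc_4_0_0_7_3_2 [pcs_7_3_2]: "card (GS 4 0 0 7 3 2) = 280"
  by (rule trans[OF card_GS[of 4 0 0 7 3 2, unfolded pl]]) (simp add: pcs_7_3_2 del: One_nat_def)

lemma pc_1_2_1_7_3_2 [pcs_7_3_2]: "card (GS 1 2 1 7 3 2) = 0"
  by (rule GS_zero) simp

lemma pc_2_1_1_7_3_2 [pcs_7_3_2]: "card (GS 2 1 1 7 3 2) = 105"
  by (rule trans[OF card_GS[of 2 1 1 7 3 2, unfolded pl]]) (simp add: pcs_7_3_2 del: One_nat_def)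

lemma pc_3_0_1_7_3_2 [pcs_7_3_2]: "card (GS 3 0 1 7 3 2) = 0"
  by (rule GS_zero) simp

lemma pc_2_0_1_7_3_2 [pcs_7_3_2]: "card (GS 2 0 1 7 3 2) = 0"
  by (rule GS_zero) simp

lemma pc_3_0_0_7_3_2 [pcs_7_3_2]: "card (GS 3 0 0 7 3 2) = 630"
  by (rule trans[OF card_GS[of 3 0 0 7 3 2, unfolded pl]]) (simp add: pcs_7_3_2 del: One_nat_def)

lemma pc_1_2_0_7_3_2 [pcs_7_3_2]: "card (GS 1 2 0 7 3 2) = 0"
  by (rule GS_zero) simp

lemma pc_1_1_1_7_3_2 [pcs_7_3_2]: "card (GS 1 1 1 7 3 2) = 105"
  by (rule trans[OF card_GS[of 1 1 1 7 3 2, unfolded pl]]) (simp add: pcs_7_3_2 del: One_nat_def)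

lemma pc_2_1_0_7_3_2 [pcs_7_3_2]: "card (GS 2 1 0 7 3 2) = 595"
  by (rule trans[OF card_GS[of 2 1 0 7 3 2, unfolded pl]]) (simp add: pcs_7_3_2 del: One_nat_def)

lemma pc_1_0_1_7_3_2 [pcs_7_3_2]: "card (GS 1 0 1 7 3 2) = 0"
  by (rule GS_zero) simp

lemma pc_1_1_0_7_3_2 [pcs_7_3_2]: "card (GS 1 1 0 7 3 2) = 700"
  by (rule trans[OF card_GS[of 1 1 0 7 3 2, unfolded pl]]) (simp add: pcs_7_3_2 del: One_nat_def)

lemma pc_2_0_0_7_3_2 [pcs_7_3_2]: "card (GS 2 0 0 7 3 2) = 1225"
  by (rule trans[OF card_GS[of 2 0 0 7 3 2, unfolded pl]]) (simp add: pcs_7_3_2 del: One_nat_def)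

lemma pc_0_1_0_7_3_2 [pcs_7_3_2]: "card (GS 0 1 0 7 3 2) = 0"
  by (rule GS_zero) simp

lemma pc_0_0_1_7_3_2 [pcs_7_3_2]: "card (GS 0 0 1 7 3 2) = 0"
  by (rule GS_zero) simp

lemma pc_1_0_0_7_3_2 [pcs_7_3_2]: "card (GS 1 0 0 7 3 2) = 1925"
  by (rule trans[OF card_GS[of 1 0 0 7 3 2, unfolded pl]]) (simp add: pcs_7_3_2 del: One_nat_def)

lemma pc_0_0_0_7_3_2 [pcs_7_3_2]: "card (GS 0 0 0 7 3 2) = 1925"
  by (rule trans[OF card_GS[of 0 0 0 7 3 2, unfolded pl]]) (simp add: pcs_7_3_2 del: One_nat_def)




lemma fs: "(fact (Suc k) :: real) = (real k + 1) * fact k" by simp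

lemma fr_eval_m:
  "fr (m+4) (m+2) (m+2) = fact (3*m+8) * 12 / (fact (m+6) * fact (m+3) * fact (m+2))"
  "fr (m+4) (m+3) (m+1) = fact (3*m+8) * 30 / (fact (m+6) * fact (m+4) * fact (m+1))"
  "fr (m+4) (m+4) m = fact (3*m+8) * 30 / (fact (m+6) * fact (m+5) * fact m)"
  "fr (m+7) (m+7) (m+7) = fact (3*m+21) * 2 / (fact (m+9) * fact (m+8) * fact (m+7))"
proof -
  have a: "m+4+(m+2)+(m+2) = 3*m+8" "m+4+(m+3)+(m+1) = 3*m+8" "m+4+(m+4)+m = 3*m+8" "m+7+(m+7)+(m+7) = 3*m+21"
    "m+4+2 = m+6" "m+2+1 = m+3" "m+3+1 = m+4" "m+4+1 = m+5" "m+7+2 = m+9" "m+7+1 = m+8" by simp_all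
  show "fr (m+4) (m+2) (m+2) = fact (3*m+8) * 12 / (fact (m+6) * fact (m+3) * fact (m+2))"
    "fr (m+4) (m+3) (m+1) = fact (3*m+8) * 30 / (fact (m+6) * fact (m+4) * fact (m+1))"
    "fr (m+4) (m+4) m = fact (3*m+8) * 30 / (fact (m+6) * fact (m+5) * fact m)"
    "fr (m+7) (m+7) (m+7) = fact (3*m+21) * 2 / (fact (m+9) * fact (m+8) * fact (m+7))"
    unfolding fr_def a by simp_all
qed

lemma ratio: "(F::real)>0 \<Longrightarrow> a>0 \<Longrightarrow> b>0 \<Longrightarrow> c>0 \<Longrightarrow> Q>0 \<Longrightarrow> p>0 \<Longrightarrow> q>0 \<Longrightarrow> r>0 \<Longrightarrow> k2 > 0 \<Longrightarrow>
  (F * k1 / (a*b*c)) / ((Q*F) * k2 / ((p*a)*(q*b)*(r*c))) = k1/k2 * (p*q*r)/Q"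
  by (simp add: field_simps)

lemma alg_big:
  fixes m :: nat
  defines "x \<equiv> real m + 7"
  shows "(1320 * fr (m+4) (m+2) (m+2) + 2673 * fr (m+4) (m+3) (m+1) + 1925 * fr (m+4) (m+4) m) / fr (m+7) (m+7) (m+7) =
    (110 * x ^ 2 * (x - 1) * (x + 1) ^ 2 * (x + 2)
       * (233 * x ^ 2 - 1933 * x + 3984))
    / (81 * (3 * x - 1) * (3 * x - 2) * (3 * x - 4) * (3 * x - 5)
       * (3 * x - 7) * (3 * x - 8) * (3 * x - 10) * (3 * x - 11))"
proof -
  define Q where "Q = (3*x-12)*(3*x-11)*(3*x-10)*(3*x-9)*(3*x-8)*(3*x-7)*(3*x-6)*(3*x-5)*(3*x-4)*(3*x-3)*(3*x-2)*(3*x-1)*(3*x)"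
  have x7: "x \<ge> 7" unfolding x_def by simp
  have Qpos: "Q > 0" unfolding Q_def using x7 by (auto intro!: mult_pos_pos)
  have eQ: "(fact (3*m+21) :: real) = Q * fact (3*m+8)"
  proof -
    have h: "3*m + 21 = Suc (Suc (Suc (Suc (Suc (Suc (Suc (Suc (Suc (Suc (Suc (Suc (Suc (3*m+8)))))))))))))" by simp
    show ?thesis unfolding h fact_Suc Q_def x_def by (simp add: algebra_simps)
  qed
  have e9: "(fact (m+9) :: real) = (x*(x+1)*(x+2)) * fact (m+6)"
  proof -
    have h: "m + 9 = Suc (Suc (Suc ((m+6))))" by simp
    show ?thesis unfolding h fact_Suc x_def by (simp add: algebra_simps)
  qed
  have e8a: "(fact (m+8) :: real) = ((x-3)*(x-2)*(x-1)*x*(x+1)) * fact (m+3)"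
  proof -
    have h: "m + 8 = Suc (Suc (Suc (Suc (Suc ((m+3))))))" by simp
    show ?thesis unfolding h fact_Suc x_def by (simp add: algebra_simps)
  qed
  have e7a: "(fact (m+7) :: real) = ((x-4)*(x-3)*(x-2)*(x-1)*x) * fact (m+2)"
  proof -
    have h: "m + 7 = Suc (Suc (Suc (Suc (Suc ((m+2))))))" by simp
    show ?thesis unfolding h fact_Suc x_def by (simp add: algebra_simps)
  qed
  have e8b: "(fact (m+8) :: real) = ((x-2)*(x-1)*x*(x+1)) * fact (m+4)"
  proof -
    have h: "m + 8 = Suc (Suc (Suc (Suc ((m+4)))))" by simp
    show ?thesis unfolding h fact_Suc x_def by (simp add: algebra_simps)
  qed
  have e7b: "(fact (m+7) :: real) = ((x-5)*(x-4)*(x-3)*(x-2)*(x-1)*x) * fact (m+1)"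
  proof -
    have h: "m + 7 = Suc (Suc (Suc (Suc (Suc (Suc ((m+1)))))))" by simp
    show ?thesis unfolding h fact_Suc x_def by (simp add: algebra_simps)
  qed
  have e8c: "(fact (m+8) :: real) = ((x-1)*x*(x+1)) * fact (m+5)"
  proof -
    have h: "m + 8 = Suc (Suc (Suc ((m+5))))" by simp
    show ?thesis unfolding h fact_Suc x_def by (simp add: algebra_simps)
  qed
  have e7c: "(fact (m+7) :: real) = ((x-6)*(x-5)*(x-4)*(x-3)*(x-2)*(x-1)*x) * fact m"
  proof -
    have h: "m + 7 = Suc (Suc (Suc (Suc (Suc (Suc (Suc ((m))))))))" by simp
    show ?thesis unfolding h fact_Suc x_def by (simp add: algebra_simps)
  qed
  have T5: "fr (m+4) (m+2) (m+2) / fr (m+7) (m+7) (m+7) = 12/2 * ((x*(x+1)*(x+2)) * ((x-3)*(x-2)*(x-1)*x*(x+1)) * ((x-4)*(x-3)*(x-2)*(x-1)*x)) / Q"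
    unfolding fr_eval_m(1,4) eQ
    apply (subst e9, subst e8a, subst e7a)
    apply (rule ratio)
    using Qpos x7 by (auto intro!: mult_pos_pos)
  have T6: "fr (m+4) (m+3) (m+1) / fr (m+7) (m+7) (m+7) = 30/2 * ((x*(x+1)*(x+2)) * ((x-2)*(x-1)*x*(x+1)) * ((x-5)*(x-4)*(x-3)*(x-2)*(x-1)*x)) / Q"
    unfolding fr_eval_m(2,4) eQ
    apply (subst e9, subst e8b, subst e7b)
    apply (rule ratio)
    using Qpos x7 by (auto intro!: mult_pos_pos)
  have T7: "fr (m+4) (m+4) m / fr (m+7) (m+7) (m+7) = 30/2 * ((x*(x+1)*(x+2)) * ((x-1)*x*(x+1)) * ((x-6)*(x-5)*(x-4)*(x-3)*(x-2)*(x-1)*x)) / Q"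
    unfolding fr_eval_m(3,4) eQ
    apply (subst e9, subst e8c, subst e7c)
    apply (rule ratio)
    using Qpos x7 by (auto intro!: mult_pos_pos)
  define K where "K = x*(x-1)*(x-2)*(x-3)*(x-4)"
  define N where "N = x ^ 2 * (x - 1) * (x + 1) ^ 2 * (x + 2) * (233 * x ^ 2 - 1933 * x + 3984)"
  define D8 where "D8 = (3 * x - 1) * (3 * x - 2) * (3 * x - 4) * (3 * x - 5) * (3 * x - 7) * (3 * x - 8) * (3 * x - 10) * (3 * x - 11)"
  have core: "1320 * (12/2 * ((x*(x+1)*(x+2)) * ((x-3)*(x-2)*(x-1)*x*(x+1)) * ((x-4)*(x-3)*(x-2)*(x-1)*x)))
     + 2673 * (30/2 * ((x*(x+1)*(x+2)) * ((x-2)*(x-1)*x*(x+1)) * ((x-5)*(x-4)*(x-3)*(x-2)*(x-1)*x)))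
     + 1925 * (30/2 * ((x*(x+1)*(x+2)) * ((x-1)*x*(x+1)) * ((x-6)*(x-5)*(x-4)*(x-3)*(x-2)*(x-1)*x))) = 330 * N * K"
    unfolding N_def K_def by algebra
  have QK: "Q = 243 * K * D8" unfolding Q_def K_def D8_def by (simp add: algebra_simps)
  have Kpos: "K > 0" unfolding K_def using x7 by (auto intro!: mult_pos_pos)
  have Dpos: "D8 > 0" unfolding D8_def using x7 by (auto intro!: mult_pos_pos)
  have B0: "fr (m+7) (m+7) (m+7) \<noteq> 0" unfolding fr_eval_m(4) by simp
  have "(1320 * fr (m+4) (m+2) (m+2) + 2673 * fr (m+4) (m+3) (m+1) + 1925 * fr (m+4) (m+4) m) / fr (m+7) (m+7) (m+7)
     = 1320 * (fr (m+4) (m+2) (m+2) / fr (m+7) (m+7) (m+7)) + 2673 * (fr (m+4) (m+3) (m+1) / fr (m+7) (m+7) (m+7))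
       + 1925 * (fr (m+4) (m+4) m / fr (m+7) (m+7) (m+7))"
    by (simp add: add_divide_distrib)
  also have "\<dots> = (330 * N * K) / Q" unfolding T5 T6 T7 core[symmetric] by (simp add: add_divide_distrib)
  also have "\<dots> = 110 * N / (81 * D8)" unfolding QK using Kpos Dpos by (simp add: field_simps)
  finally show ?thesis unfolding N_def D8_def by (simp add: mult.assoc)
qed




theorem mainTheorem7:
  fixes n :: nat
  assumes "n \<ge> 5"
  shows "syt_prob n (\<lambda>T. T (3, 3) = 13) =
    (110 * real n ^ 2 * (real n - 1) * (real n + 1) ^ 2 * (real n + 2)
       * (233 * real n ^ 2 - 1933 * real n + 3984))
    / (81 * (3 * real n - 1) * (3 * real n - 2) * (3 * real n - 4) * (3 * real n - 5)
       * (3 * real n - 7) * (3 * real n - 8) * (3 * real n - 10) * (3 * real n - 11))"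
proof -
  have n5: "5 \<le> n" using assms .
  have cS: "real (card (SYT3 n)) = fr n n n"
    using card_SYT[of n] closed[of n n n n] by simp
  have cE0: "card {T \<in> SYT3 n. T (3,3) = 13} = 1320 * card (GS 5 5 3 n n n) + 2673 * card (GS 6 4 3 n n n) + 1925 * card (GS 7 3 3 n n n)"
    using card_event[of n] n5 card_EV[of n] pc_0_0_0_5_5_2 pc_0_0_0_6_4_2 pc_0_0_0_7_3_2 by (simp add: EV_def)
  have c5: "real (card (GS 5 5 3 n n n)) = fr (n-3) (n-5) (n-5)"
  proof -
    have "GS (n-(n-5)) (n-(n-5)) (n-(n-3)) n n n = GS 5 5 3 n n n" using n5 by simp
    then show ?thesis using closed[of "n-5" "n-5" "n-3" n] n5 by simp
  qed
  have c6: "real (card (GS 6 4 3 n n n)) = (if n \<ge> 6 then fr (n-3) (n-4) (n-6) else 0)"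
  proof (cases "n \<ge> 6")
    case True
    have "GS (n-(n-6)) (n-(n-4)) (n-(n-3)) n n n = GS 6 4 3 n n n" using True by simp
    then show ?thesis using closed[of "n-6" "n-4" "n-3" n] True by simp
  next
    case False then show ?thesis by (simp add: GS_zero)
  qed
  have c7: "real (card (GS 7 3 3 n n n)) = (if n \<ge> 7 then fr (n-3) (n-3) (n-7) else 0)"
  proof (cases "n \<ge> 7")
    case True
    have "GS (n-(n-7)) (n-(n-3)) (n-(n-3)) n n n = GS 7 3 3 n n n" using True by simp
    then show ?thesis using closed[of "n-7" "n-3" "n-3" n] True by simp
  next
    case False then show ?thesis by (simp add: GS_zero)
  qed
  have prob: "syt_prob n (\<lambda>T. T (3, 3) = 13) =
     (1320 * fr (n-3) (n-5) (n-5) + 2673 * (if n \<ge> 6 then fr (n-3) (n-4) (n-6) else 0)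
      + 1925 * (if n \<ge> 7 then fr (n-3) (n-3) (n-7) else 0)) / fr n n n"
    unfolding syt_prob_def cE0 cS of_nat_add of_nat_mult c5 c6 c7 by simp
  consider "n = 5" | "n = 6" | "n \<ge> 7" using n5 by linarith
  then show ?thesis
  proof cases
    case 1
    then show ?thesis unfolding prob by (simp add: fr_def fact_numeral)
  next
    case 2
    then show ?thesis unfolding prob by (simp add: fr_def fact_numeral)
  next
    case 3
    then obtain m where m: "n = m + 7" by (metis add.commute le_Suc_ex)
    have e: "n - 3 = m + 4" "n - 5 = m + 2" "n - 4 = m + 3" "n - 6 = m + 1" "n - 7 = m" using m by auto
    have x: "real n = real m + 7" using m by simp
    show ?thesis unfolding prob e using 3 alg_big[of m] unfolding x m by simp
  qed
qed


end
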